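(* Let $S\subseteq \mathbb{R}^n/\mathbb{R}\mathbb{1}$ be a finite set of sites and $k$ a positive integer with $k\le|S|$. Then the expectation value of the competitive factor $\ell(\mathcal{C})/\ell^*$ of the clustering $\mathcal{C}$ produced by the tropical $k$-means++ algorithm on $S$ is at most $2n(2+\log k)$.
   Context: $\mathbb{1}=(1,\dots,1)\in\mathbb{R}^n$, $\mathbb{R}^n/\mathbb{R}\mathbb{1}$ is the tropical torus, and $d_{\Delta}(x,y)=\sum_{i=1}^n (y_i-x_i) + n\max_{i}(x_i-y_i)$ is the asymmetric tropical distance (invariant under adding multiples of $\mathbb{1}$ to either argument, hence defined on the torus). For a finite set $C$ of points in the torus, the Fermat--Weber set $\mathrm{FW}(C)$ is the set of minimizers $y$ of $\sum_{s\in C}d_\Delta(s,y)$; it is a polytope closed under tropical linear combinations $\max_i(v_i+\lambda_i\mathbb{1})$, with a minimal finite generating set $v_1,\dots,v_l$ under tropical linear combinations (tropical vertices); the tropical median of $C$ is $\frac1l\sum_i v_i$. Tropical $k$-means algorithm: from initial centroids $c_1,\dots,c_k$, alternate (A-step) $C_j\leftarrow\{s\in S : j=\arg\min_i d_\Delta(s,c_i)\}$ and (M-step) $c_j\leftarrow$ tropical median of $C_j$, until assignments do not change. Tropical $k$-means++: the initial centroids are chosen by taking $c_1\in S$ uniformly at random and, for $j=2,\dots,k$, choosing $c_j\in S$ at random where $s\in S$ is chosen with probability $\min_{i<j}d_\Delta(s,c_i)/\sum_{t\in S}\min_{i<j}d_\Delta(t,c_i)$; then the tropical $k$-means algorithm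 is run. For a clustering $\mathcal{C}=\{C_1,\dots,C_k\}$ of $S$ with centroids $c_i$ (the tropical medians of the $C_i$), its loss is $\ell(\mathcal{C})=\sum_{i}\sum_{s\in C_i}d_\Delta(s,c_i)$, and $\ell^*$ denotes the global minimum over choices of $c_1,\dots,c_k$ of $\sum_{s\in S}\min_{i\in[k]}d_\Delta(s,c_i)$. The competitive factor of $\mathcal{C}$ is $\ell(\mathcal{C})/\ell^*$. *)

theory Defs
  imports "HOL-Analysis.Analysis" "HOL-Probability.Probability"
begin

text \<open>Points of the tropical torus R^n / R1 are represented by vectors in real^'n
  (n = CARD('n)); everything below is invariant under adding multiples of 1.\<close>

definition tequiv :: "real^'n \<Rightarrow> real^'n \<Rightarrow> bool" where
  "tequiv x y \<longleftrightarrow> (\<exists>c::real. \<forall>i. y $ i = x $ i + c)"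

definition tdist :: "real^'n \<Rightarrow> real^'n \<Rightarrow> real" where
  "tdist x y = (\<Sum>i\<in>UNIV. y $ i - x $ i) + real CARD('n) * Max (range (\<lambda>i. x $ i - y $ i))"

definition FW :: "(real^'n) set \<Rightarrow> (real^'n) set" where
  "FW C = {y. \<forall>z. (\<Sum>s\<in>C. tdist s y) \<le> (\<Sum>s\<in>C. tdist s z)}"

definition tspan :: "(real^'n) set \<Rightarrow> (real^'n) set" where
  "tspan V = {x. \<exists>lam :: real^'n \<Rightarrow> real. x = (\<chi> i. Max ((\<lambda>v. v $ i + lam v) ` V))}"

definition tvertices :: "(real^'n) set \<Rightarrow> (real^'n) set \<Rightarrow> bool" where
  "tvertices C V \<longleftrightarrow> finite V \<and> V \<noteq> {} \<and> tspan V = FW C \<and> (\<forall>W. W \<subset> V \<longrightarrow> tspan W \<noteq> FW C)"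

text \<open>Tropical median: average of the tropical vertices (well defined up to adding
  multiples of 1, which is all that matters on the torus).\<close>
definition tmedian :: "(real^'n) set \<Rightarrow> real^'n" where
  "tmedian C = (SOME m. \<exists>V. tvertices C V \<and> m = (1 / real (card V)) *\<^sub>R (\<Sum>v\<in>V. v))"

definition valid_assign :: "(real^'n) set \<Rightarrow> nat \<Rightarrow> (nat \<Rightarrow> real^'n) \<Rightarrow> (real^'n \<Rightarrow> nat) \<Rightarrow> bool" where
  "valid_assign S k c a \<longleftrightarrow>
     (\<forall>s\<in>S. a s < k \<and> (\<forall>i<k. tdist s (c (a s)) \<le> tdist s (c i)))"

definition cluster :: "(real^'n) set \<Rightarrow> (real^'n \<Rightarrow> nat) \<Rightarrow> nat \<Rightarrow> (real^'n) set" where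
  "cluster S a j = {s\<in>S. a s = j}"

definition mstep :: "(real^'n) set \<Rightarrow> (nat \<Rightarrow> real^'n) \<Rightarrow> (real^'n \<Rightarrow> nat) \<Rightarrow> (nat \<Rightarrow> real^'n)" where
  "mstep S c a = (\<lambda>j. if cluster S a j = {} then c j else tmedian (cluster S a j))"

text \<open>a is a final assignment produced by the tropical k-means algorithm started from
  centroids c0: alternate A- and M-steps until the assignment does not change.\<close>
definition kmeans_output :: "(real^'n) set \<Rightarrow> nat \<Rightarrow> (nat \<Rightarrow> real^'n) \<Rightarrow> (real^'n \<Rightarrow> nat) \<Rightarrow> bool" where
  "kmeans_output S k c0 a \<longleftrightarrow>
    (\<exists>m::nat. \<exists>cs :: nat \<Rightarrow> nat \<Rightarrow> real^'n. \<exists>as :: nat \<Rightarrow> real^'n \<Rightarrow> nat.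
       m \<ge> 1 \<and> cs 0 = c0 \<and>
       (\<forall>t\<le>m. valid_assign S k (cs t) (as t)) \<and>
       (\<forall>t<m. cs (Suc t) = mstep S (cs t) (as t)) \<and>
       (\<forall>t. 1 \<le> t \<and> t < m \<longrightarrow> (\<exists>s\<in>S. as t s \<noteq> as (t - 1) s)) \<and>
       (\<forall>s\<in>S. as m s = as (m - 1) s) \<and>
       a = as m)"

definition kloss :: "(real^'n) set \<Rightarrow> nat \<Rightarrow> (real^'n \<Rightarrow> nat) \<Rightarrow> real" where
  "kloss S k a = (\<Sum>j<k. \<Sum>s\<in>cluster S a j. tdist s (tmedian (cluster S a j)))"

definition lstar :: "(real^'n) set \<Rightarrow> nat \<Rightarrow> real" where
  "lstar S k = Inf {(\<Sum>s\<in>S. Min ((\<lambda>i. tdist s (c i)) ` {..<k})) | c :: nat \<Rightarrow> real^'n. True}"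

definition Dmin :: "(real^'n) list \<Rightarrow> real^'n \<Rightarrow> real" where
  "Dmin cs s = Min ((\<lambda>c. tdist s c) ` set cs)"

definition kpp_next :: "(real^'n) set \<Rightarrow> (real^'n) list \<Rightarrow> (real^'n) pmf" where
  "kpp_next S cs =
     (if cs = [] \<or> (\<Sum>t\<in>S. Dmin cs t) = 0 then pmf_of_set S
      else embed_pmf (\<lambda>s. if s \<in> S then Dmin cs s / (\<Sum>t\<in>S. Dmin cs t) else 0))"

fun kpp_seeds :: "(real^'n) set \<Rightarrow> nat \<Rightarrow> (real^'n) list pmf" where
  "kpp_seeds S 0 = return_pmf []"
| "kpp_seeds S (Suc j) =
     bind_pmf (kpp_seeds S j) (\<lambda>cs. map_pmf (\<lambda>c. cs @ [c]) (kpp_next S cs))"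

end

theory Submission
  imports Defs
begin


lemma Max_range_ge: "f i \<le> Max (range (f::'n::finite \<Rightarrow> real))"
  by (rule Max_ge) auto

lemma Max_range_le_iff: "Max (range (f::'n::finite \<Rightarrow> real)) \<le> c \<longleftrightarrow> (\<forall>i. f i \<le> c)"
  by (subst Max_le_iff) auto

lemma Max_range_in: "\<exists>i. Max (range (f::'n::finite \<Rightarrow> real)) = f i"
proof -
  have "Max (range f) \<in> range f" by (rule Max_in) auto
  then show ?thesis by (metis rangeE)
qed

lemma tdist_alt: "tdist x y = (\<Sum>i\<in>UNIV. Max (range (\<lambda>j. x$j - y$j)) - (x$i - y$i))"
proof -
  have "(\<Sum>i\<in>UNIV. Max (range (\<lambda>j. x$j - y$j)) - (x$i - y$i))
     = real CARD('a) * Max (range (\<lambda>j. x$j - y$j)) - (\<Sum>i\<in>UNIV. x$i - y$i)"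
    by (simp add: sum_subtractf)
  moreover have "(\<Sum>i\<in>UNIV. y$i - x$i) = - (\<Sum>i\<in>UNIV. x$i - y$i)"
    by (simp add: sum_negf[symmetric])
  ultimately show ?thesis unfolding tdist_def by simp
qed

lemma tdist_nonneg: "0 \<le> tdist x y"
  unfolding tdist_alt by (rule sum_nonneg) (simp add: Max_range_ge)

lemma tdist_self: "tdist x x = 0"
  unfolding tdist_def by simp

lemma tdist_pair: "(s$i - y$i) - (s$j - y$j) \<le> tdist s y"
proof -
  have "(s$i - y$i) - (s$j - y$j) \<le> Max (range (\<lambda>l. s$l - y$l)) - (s$j - y$j)"
    using Max_range_ge[of "\<lambda>l. s$l - y$l" i] by simp
  also have "\<dots> \<le> (\<Sum>l\<in>UNIV. Max (range (\<lambda>j. s$j - y$j)) - (s$l - y$l))"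
    by (rule member_le_sum) (auto simp: Max_range_ge)
  finally show ?thesis unfolding tdist_alt .
qed

lemma tdist_triangle: "tdist x z \<le> tdist x y + tdist y z"
proof -
  have s: "(\<Sum>i\<in>UNIV. z$i - x$i) = (\<Sum>i\<in>UNIV. y$i - x$i) + (\<Sum>i\<in>UNIV. z$i - y$i)"
    by (simp add: sum.distrib[symmetric])
  have m: "Max (range (\<lambda>i. x$i - z$i)) \<le> Max (range (\<lambda>i. x$i - y$i)) + Max (range (\<lambda>i. y$i - z$i))"
    unfolding Max_range_le_iff
  proof
    fix i
    have "x$i - y$i \<le> Max (range (\<lambda>i. x$i - y$i))" by (rule Max_range_ge)
    moreover have "y$i - z$i \<le> Max (range (\<lambda>i. y$i - z$i))" by (rule Max_range_ge)
    ultimately show "x$i - z$i \<le> Max (range (\<lambda>i. x$i - y$i)) + Max (range (\<lambda>i. y$i - z$i))" by linarith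
  qed
  have "real CARD('a) * Max (range (\<lambda>i. x$i - z$i)) \<le> real CARD('a) * (Max (range (\<lambda>i. x$i - y$i)) + Max (range (\<lambda>i. y$i - z$i)))"
    by (rule mult_left_mono[OF m]) simp
  then show ?thesis unfolding tdist_def s by (simp add: algebra_simps)
qed

lemma tdist_swap: "tdist y x \<le> (real CARD('n) - 1) * tdist x (y::real^'n)"
proof -
  define Z where "Z = (\<Sum>i\<in>UNIV. x$i - y$i)"
  define M where "M = Max (range (\<lambda>i. x$i - y$i))"
  define m where "m = Max (range (\<lambda>i. y$i - x$i))"
  obtain i0 where i0: "m = y$i0 - x$i0" using Max_range_in unfolding m_def by blast
  have Z1: "Z = (x$i0 - y$i0) + (\<Sum>i\<in>UNIV-{i0}. x$i - y$i)"
    unfolding Z_def by (subst sum.remove[of UNIV i0]) auto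
  have Z2: "(\<Sum>i\<in>UNIV-{i0}. x$i - y$i) \<le> (\<Sum>i\<in>UNIV-{i0}. M)"
    by (rule sum_mono) (simp add: M_def Max_range_ge)
  have Z3: "(\<Sum>i\<in>UNIV-{i0}. M) = (real CARD('n) - 1) * M"
    by (simp add: card_Diff_singleton of_nat_diff)
  have A: "Z + m \<le> (real CARD('n) - 1) * M" using i0 Z1 Z2 Z3 by linarith
  have n0: "real CARD('n) \<ge> 0" by simp
  have h: "real CARD('n) * (Z + m) \<le> real CARD('n) * ((real CARD('n) - 1) * M)" by (rule mult_left_mono[OF A n0])
  have e1: "tdist y x = Z + real CARD('n) * m" unfolding tdist_def Z_def m_def by simp
  have e2: "tdist x y = - Z + real CARD('n) * M" unfolding tdist_def Z_def M_def
    by (simp add: sum_negf[symmetric])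
  show ?thesis unfolding e1 e2 using h by (simp add: algebra_simps)
qed

lemma tdist_swap_sum: "tdist x y + tdist y x \<le> real CARD('n) * tdist x (y::real^'n)"
  using tdist_swap[of y x] by (simp add: algebra_simps)

definition shift :: "real^'n \<Rightarrow> real \<Rightarrow> real^'n" where
  "shift y c = (\<chi> i. y$i + c)"

lemma shift_nth[simp]: "shift y c $ i = y$i + c"
  by (simp add: shift_def)

lemma tdist_shift: "tdist s (shift y c) = tdist s y"
proof -
  have "(\<Sum>i\<in>UNIV. shift y c $ i - s$i) = (\<Sum>i\<in>UNIV. (y$i - s$i) + c)"
    by (rule sum.cong) auto
  also have "\<dots> = (\<Sum>i\<in>UNIV. y$i - s$i) + real CARD('a) * c"
    by (simp add: sum.distrib)
  finally have "(\<Sum>i\<in>UNIV. shift y c $ i - s$i) = (\<Sum>i\<in>UNIV. y$i - s$i) + real CARD('a) * c" .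
  moreover have "Max (range (\<lambda>i. s$i - shift y c $ i)) = Max (range (\<lambda>i. s$i - y$i)) + - c"
  proof -
    have e: "range (\<lambda>i. s$i - shift y c $ i) = (\<lambda>i. (s$i - y$i) + - c) ` UNIV" by auto
    have "Max ((\<lambda>i. (s$i - y$i) + - c) ` UNIV) = Max (range (\<lambda>i. s$i - y$i)) + - c"
      by (rule Max_add_commute) auto
    then show ?thesis by (simp only: e)
  qed
  ultimately have "tdist s (shift y c) = ((\<Sum>i\<in>UNIV. y$i - s$i) + real CARD('a) * c) + real CARD('a) * (Max (range (\<lambda>i. s$i - y$i)) + - c)"
    unfolding tdist_def by (simp only:)
  then show ?thesis unfolding tdist_def by (simp add: algebra_simps)
qed

definition vmax :: "real^'n \<Rightarrow> real^'n \<Rightarrow> real^'n" where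
  "vmax y z = (\<chi> i. max (y$i) (z$i))"
definition vmin :: "real^'n \<Rightarrow> real^'n \<Rightarrow> real^'n" where
  "vmin y z = (\<chi> i. min (y$i) (z$i))"

lemma vmax_nth[simp]: "vmax y z $ i = max (y$i) (z$i)" by (simp add: vmax_def)
lemma vmin_nth[simp]: "vmin y z $ i = min (y$i) (z$i)" by (simp add: vmin_def)

lemma tdist_lattice: "tdist s (vmax y z) + tdist s (vmin y z) \<le> tdist s y + tdist s z"
proof -
  define My where "My = Max (range (\<lambda>i. s$i - y$i))"
  define Mz where "Mz = Max (range (\<lambda>i. s$i - z$i))"
  have s: "(\<Sum>i\<in>UNIV. vmax y z $ i - s$i) + (\<Sum>i\<in>UNIV. vmin y z $ i - s$i)
        = (\<Sum>i\<in>UNIV. y $ i - s$i) + (\<Sum>i\<in>UNIV. z $ i - s$i)"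
  proof -
    have "\<And>i. (vmax y z $ i - s$i) + (vmin y z $ i - s$i) = (y $ i - s$i) + (z $ i - s$i)"
      by (simp add: max_def min_def)
    then show ?thesis by (simp add: sum.distrib[symmetric])
  qed
  have m1: "Max (range (\<lambda>i. s$i - vmax y z $ i)) \<le> min My Mz"
    unfolding Max_range_le_iff
  proof
    fix i
    have "s$i - y$i \<le> My" unfolding My_def by (rule Max_range_ge)
    moreover have "s$i - z$i \<le> Mz" unfolding Mz_def by (rule Max_range_ge)
    ultimately show "s$i - vmax y z $ i \<le> min My Mz" by (simp add: max_def)
  qed
  have m2: "Max (range (\<lambda>i. s$i - vmin y z $ i)) \<le> max My Mz"
    unfolding Max_range_le_iff
  proof
    fix i
    have "s$i - y$i \<le> My" unfolding My_def by (rule Max_range_ge)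
    moreover have "s$i - z$i \<le> Mz" unfolding Mz_def by (rule Max_range_ge)
    ultimately show "s$i - vmin y z $ i \<le> max My Mz" by (simp add: min_def max_def)
  qed
  have "Max (range (\<lambda>i. s$i - vmax y z $ i)) + Max (range (\<lambda>i. s$i - vmin y z $ i)) \<le> My + Mz"
  proof -
    have "min My Mz + max My Mz = My + Mz" by (simp add: min_def max_def)
    then show ?thesis using m1 m2 by linarith
  qed
  then have "real CARD('a) * (Max (range (\<lambda>i. s$i - vmax y z $ i)) + Max (range (\<lambda>i. s$i - vmin y z $ i)))
      \<le> real CARD('a) * (My + Mz)" by (rule mult_left_mono) simp
  then show ?thesis unfolding tdist_def using s by (simp add: algebra_simps My_def Mz_def)
qed

definition fsum :: "(real^'n) set \<Rightarrow> real^'n \<Rightarrow> real" where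
  "fsum C y = (\<Sum>s\<in>C. tdist s y)"

lemma FW_iff: "y \<in> FW C \<longleftrightarrow> (\<forall>z. fsum C y \<le> fsum C z)"
  by (simp add: FW_def fsum_def)

lemma fsum_lattice: "fsum C (vmax y z) + fsum C (vmin y z) \<le> fsum C y + fsum C z"
  unfolding fsum_def sum.distrib[symmetric] by (rule sum_mono) (rule tdist_lattice)

lemma fsum_shift: "fsum C (shift y c) = fsum C y"
  by (simp add: fsum_def tdist_shift)

lemma FW_vmax: "y \<in> FW C \<Longrightarrow> z \<in> FW C \<Longrightarrow> vmax y z \<in> FW C"
  unfolding FW_iff
proof (intro allI)
  fix w assume y: "\<forall>w. fsum C y \<le> fsum C w" and z: "\<forall>w. fsum C z \<le> fsum C w"
  have "fsum C z \<le> fsum C (vmin y z)" using z by blast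
  moreover have "fsum C y \<le> fsum C w" using y by blast
  ultimately show "fsum C (vmax y z) \<le> fsum C w" using fsum_lattice[of C y z] by linarith
qed

lemma FW_vmin: "y \<in> FW C \<Longrightarrow> z \<in> FW C \<Longrightarrow> vmin y z \<in> FW C"
  unfolding FW_iff
proof (intro allI)
  fix w assume y: "\<forall>w. fsum C y \<le> fsum C w" and z: "\<forall>w. fsum C z \<le> fsum C w"
  have "fsum C y \<le> fsum C (vmax y z)" using y by blast
  moreover have "fsum C z \<le> fsum C w" using z by blast
  ultimately show "fsum C (vmin y z) \<le> fsum C w" using fsum_lattice[of C y z] by linarith
qed

lemma FW_shift: "y \<in> FW C \<Longrightarrow> shift y c \<in> FW C"
  unfolding FW_iff fsum_shift .

lemma FW_Maxvec:
  assumes "finite Q" "Q \<noteq> {}" "Q \<subseteq> FW C"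
  shows "(\<chi> i. Max ((\<lambda>q. q$i) ` Q)) \<in> FW C"
  using assms
proof (induction Q rule: finite_ne_induct)
  case (singleton x)
  then show ?case by simp
next
  case (insert x F)
  have "(\<chi> i. Max ((\<lambda>q. q$i) ` insert x F)) = vmax x (\<chi> i. Max ((\<lambda>q. q$i) ` F))"
    using insert.hyps by (simp add: vec_eq_iff)
  moreover have "x \<in> FW C" "F \<subseteq> FW C" using insert.prems by auto
  ultimately show ?case using insert.IH by (simp add: FW_vmax)
qed

lemma FW_Minvec:
  assumes "finite Q" "Q \<noteq> {}" "Q \<subseteq> FW C"
  shows "(\<chi> i. Min ((\<lambda>q. q$i) ` Q)) \<in> FW C"
  using assms
proof (induction Q rule: finite_ne_induct)
  case (singleton x)
  then show ?case by simp
next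
  case (insert x F)
  have "(\<chi> i. Min ((\<lambda>q. q$i) ` insert x F)) = vmin x (\<chi> i. Min ((\<lambda>q. q$i) ` F))"
    using insert.hyps by (simp add: vec_eq_iff)
  moreover have "x \<in> FW C" "F \<subseteq> FW C" using insert.prems by auto
  ultimately show ?case using insert.IH by (simp add: FW_vmin)
qed

lemma tspan_sub_FW:
  assumes "finite V" "V \<noteq> {}" "V \<subseteq> FW C"
  shows "tspan V \<subseteq> FW C"
proof
  fix x assume "x \<in> tspan V"
  then obtain lam where x: "x = (\<chi> i. Max ((\<lambda>v. v $ i + lam v) ` V))" unfolding tspan_def by blast
  define Q where "Q = (\<lambda>v. shift v (lam v)) ` V"
  have "\<And>i. (\<lambda>q. q$i) ` Q = (\<lambda>v. v $ i + lam v) ` V" unfolding Q_def by (simp add: image_image)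
  then have "x = (\<chi> i. Max ((\<lambda>q. q$i) ` Q))" using x by simp
  moreover have "Q \<subseteq> FW C" using assms(3) unfolding Q_def by (auto intro: FW_shift)
  moreover have "finite Q" "Q \<noteq> {}" using assms unfolding Q_def by auto
  ultimately show "x \<in> FW C" using FW_Maxvec[of Q C] by simp
qed

lemma cont_Max:
  fixes h :: "'i \<Rightarrow> 'x::topological_space \<Rightarrow> real"
  assumes "finite A" "A \<noteq> {}" "\<forall>i\<in>A. continuous_on U (h i)"
  shows "continuous_on U (\<lambda>y. Max ((\<lambda>i. h i y) ` A))"
  using assms
proof (induction A rule: finite_ne_induct)
  case (singleton x) then show ?case by simp
next
  case (insert x F)
  have e: "(\<lambda>y. Max ((\<lambda>i. h i y) ` insert x F)) = (\<lambda>y. max (h x y) (Max ((\<lambda>i. h i y) ` F)))"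
    using insert.hyps by simp
  have "continuous_on U (h x)" using insert.prems by simp
  moreover have "continuous_on U (\<lambda>y. Max ((\<lambda>i. h i y) ` F))" using insert.IH insert.prems by simp
  ultimately show ?case unfolding e by (rule continuous_on_max)
qed

lemma cont_tdist: fixes s :: "real^'n" shows "continuous_on UNIV (\<lambda>y. tdist s y)"
proof -
  have c1: "continuous_on UNIV (\<lambda>y::real^'n. \<Sum>i\<in>UNIV. y$i - s$i)"
    by (intro continuous_intros)
  have c2: "continuous_on UNIV (\<lambda>y::real^'n. Max ((\<lambda>i. s$i - y$i) ` UNIV))"
    by (rule cont_Max) (auto intro!: continuous_intros)
  have "continuous_on UNIV (\<lambda>y::real^'n. (\<Sum>i\<in>UNIV. y$i - s$i) + real CARD('n) * Max ((\<lambda>i. s$i - y$i) ` UNIV))"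
    using c1 c2 by (intro continuous_intros)
  then show ?thesis unfolding tdist_def .
qed

lemma cont_fsum: "continuous_on UNIV (fsum C)"
proof -
  have "continuous_on UNIV (\<lambda>y. \<Sum>s\<in>C. tdist s y)"
    by (intro continuous_on_sum) (simp add: cont_tdist)
  then show ?thesis unfolding fsum_def[abs_def] .
qed

lemma coord_bound:
  assumes "y$k = 0"
  shows "\<bar>y$j\<bar> \<le> tdist s y + \<bar>s$j - s$k\<bar>"
proof -
  have "(s$k - y$k) - (s$j - y$j) \<le> tdist s y" by (rule tdist_pair)
  moreover have "(s$j - y$j) - (s$k - y$k) \<le> tdist s y" by (rule tdist_pair)
  moreover have "s$j - s$k \<le> \<bar>s$j - s$k\<bar>" "s$k - s$j \<le> \<bar>s$j - s$k\<bar>" by auto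
  ultimately show ?thesis using assms unfolding abs_le_iff by linarith
qed

lemma fsum_ge_tdist: "finite C \<Longrightarrow> s \<in> C \<Longrightarrow> tdist s y \<le> fsum C y"
  unfolding fsum_def by (rule member_le_sum) (auto simp: tdist_nonneg)

lemma fsum_nonneg: "0 \<le> fsum C y"
  unfolding fsum_def by (rule sum_nonneg) (simp add: tdist_nonneg)

definition Bk :: "(real^'n) set \<Rightarrow> 'n \<Rightarrow> real \<Rightarrow> (real^'n) set" where
  "Bk C k M = {y. y$k = 0 \<and> fsum C y \<le> M}"

lemma Bk_compact:
  assumes "finite C" "C \<noteq> {}"
  shows "compact (Bk C k M)"
proof -
  obtain s0 where s0: "s0 \<in> C" using assms by blast
  have "bounded (Bk C k M)"
    unfolding bounded_iff
  proof (intro exI ballI)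
    fix y assume "y \<in> Bk C k M"
    then have y: "y$k = 0" "fsum C y \<le> M" unfolding Bk_def by auto
    have t: "tdist s0 y \<le> M" using fsum_ge_tdist[OF assms(1) s0, of y] y(2) by linarith
    have "norm y \<le> (\<Sum>j\<in>UNIV. \<bar>y$j\<bar>)" by (rule norm_le_l1_cart)
    also have "\<dots> \<le> (\<Sum>j\<in>UNIV. M + \<bar>s0$j - s0$k\<bar>)"
    proof (rule sum_mono)
      fix j
      show "\<bar>y$j\<bar> \<le> M + \<bar>s0$j - s0$k\<bar>" using coord_bound[OF y(1), of j s0] t by linarith
    qed
    finally show "norm y \<le> (\<Sum>j\<in>UNIV. M + \<bar>s0$j - s0$k\<bar>)" .
  qed
  moreover have "closed (Bk C k M)" unfolding Bk_def
    by (intro closed_Collect_conj closed_Collect_eq closed_Collect_le cont_fsum continuous_intros)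
  ultimately show ?thesis using compact_eq_bounded_closed by blast
qed

lemma FW_exists:
  fixes C :: "(real^'n) set"
  assumes "finite C" "C \<noteq> {}"
  shows "\<exists>y. y \<in> FW C"
proof -
  obtain s0 where s0: "s0 \<in> C" using assms by blast
  obtain k0 :: 'n where True by blast
  define y0 where "y0 = shift s0 (- s0$k0)"
  define K where "K = Bk C k0 (fsum C y0)"
  have "y0 \<in> K" by (simp add: K_def Bk_def y0_def)
  then have "K \<noteq> {}" by blast
  moreover have "compact K" unfolding K_def by (rule Bk_compact[OF assms])
  moreover have "continuous_on K (fsum C)" by (rule continuous_on_subset[OF cont_fsum]) simp
  ultimately obtain ym where ym: "ym \<in> K" "\<forall>y\<in>K. fsum C ym \<le> fsum C y"
    using continuous_attains_inf by blast
  have "ym \<in> FW C"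
    unfolding FW_iff
  proof
    fix z
    define z' where "z' = shift z (- z$k0)"
    have z'1: "z'$k0 = 0" by (simp add: z'_def)
    have z'2: "fsum C z' = fsum C z" by (simp add: z'_def fsum_shift)
    show "fsum C ym \<le> fsum C z"
    proof (cases "fsum C z' \<le> fsum C y0")
      case True
      then have "z' \<in> K" using z'1 by (simp add: K_def Bk_def)
      then show ?thesis using ym(2) z'2 by auto
    next
      case False
      have "fsum C ym \<le> fsum C y0" using ym(1) by (simp add: K_def Bk_def)
      then show ?thesis using False z'2 by linarith
    qed
  qed
  then show ?thesis by blast
qed

lemma FW_least:
  assumes "finite C" "C \<noteq> {}"
  shows "\<exists>w. w \<in> FW C \<and> w$k = 0 \<and> (\<forall>y\<in>FW C. y$k = 0 \<longrightarrow> (\<forall>i. w$i \<le> y$i))"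
proof -
  obtain ym where ym: "ym \<in> FW C" using FW_exists[OF assms] by blast
  define K where "K = Bk C k (fsum C ym)"
  have K: "\<And>y. y \<in> K \<longleftrightarrow> y \<in> FW C \<and> y$k = 0"
  proof -
    fix y
    have "y \<in> FW C \<longleftrightarrow> fsum C y \<le> fsum C ym"
      using ym unfolding FW_iff by (meson order_trans)
    then show "y \<in> K \<longleftrightarrow> y \<in> FW C \<and> y$k = 0" by (auto simp: K_def Bk_def)
  qed
  have cK: "compact K" unfolding K_def by (rule Bk_compact[OF assms])
  have "shift ym (- ym$k) \<in> K" using K FW_shift[OF ym] by simp
  then have neK: "K \<noteq> {}" by blast
  have "\<forall>j. \<exists>p\<in>K. \<forall>y\<in>K. p$j \<le> y$j"
  proof
    fix j
    have "continuous_on K (\<lambda>y. y$j)" by (intro continuous_intros)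
    then show "\<exists>p\<in>K. \<forall>y\<in>K. p$j \<le> y$j" using continuous_attains_inf[OF cK neK] by blast
  qed
  then obtain p where p: "\<And>j. p j \<in> K" "\<And>j y. y \<in> K \<Longrightarrow> p j $ j \<le> y$j" by metis
  define w where "w = (\<chi> i. Min ((\<lambda>q. q$i) ` range p))"
  have "range p \<subseteq> FW C" using p(1) K by blast
  then have w1: "w \<in> FW C" unfolding w_def by (intro FW_Minvec) auto
  have pk: "p j $ k = 0" for j using p(1)[of j] K by blast
  have "Min ((\<lambda>q. q$k) ` range p) = 0"
  proof (rule Min_eqI)
    show "finite ((\<lambda>q. q$k) ` range p)" by simp
    show "\<And>y. y \<in> (\<lambda>q. q$k) ` range p \<Longrightarrow> 0 \<le> y" using pk by auto
    have "p k $ k \<in> (\<lambda>q. q$k) ` range p" by blast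
    then show "0 \<in> (\<lambda>q. q$k) ` range p" using pk[of k] by simp
  qed
  then have w2: "w$k = 0" by (simp add: w_def)
  have w3: "\<forall>y\<in>FW C. y$k = 0 \<longrightarrow> (\<forall>i. w$i \<le> y$i)"
  proof (intro ballI impI allI)
    fix y i assume "y \<in> FW C" "y$k = 0"
    then have yK: "y \<in> K" using K by blast
    have "w$i \<le> p i $ i" unfolding w_def by (simp add: Min_le)
    also have "\<dots> \<le> y$i" using p(2)[OF yK] .
    finally show "w$i \<le> y$i" .
  qed
  show ?thesis using w1 w2 w3 by blast
qed

lemma FW_gen:
  fixes C :: "(real^'n) set"
  assumes "finite C" "C \<noteq> {}"
  shows "\<exists>W::'n \<Rightarrow> real^'n. range W \<subseteq> FW C \<and> tspan (range W) = FW C"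
proof -
  have "\<forall>k. \<exists>w. w \<in> FW C \<and> w$k = 0 \<and> (\<forall>y\<in>FW C. y$k = 0 \<longrightarrow> (\<forall>i. w$i \<le> y$i))"
    using FW_least[OF assms] by blast
  then obtain W where W: "\<And>k. W k \<in> FW C" "\<And>k. W k $ k = 0"
     "\<And>k y i. y \<in> FW C \<Longrightarrow> y$k = 0 \<Longrightarrow> W k $ i \<le> y$i" by metis
  have key: "W l $ i + x$l \<le> x$i" if x: "x \<in> FW C" for x l i
  proof -
    have "shift x (- x$l) \<in> FW C" by (rule FW_shift[OF x])
    moreover have "shift x (- x$l) $ l = 0" by simp
    ultimately have "W l $ i \<le> shift x (- x$l) $ i" by (rule W(3))
    then show ?thesis by simp
  qed
  have "tspan (range W) = FW C"
  proof
    show "tspan (range W) \<subseteq> FW C" by (rule tspan_sub_FW) (use W in auto)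
    show "FW C \<subseteq> tspan (range W)"
    proof
      fix x assume x: "x \<in> FW C"
      define lam where "lam v = Max ((\<lambda>l. x$l) ` {l. W l = v})" for v
      have "x = (\<chi> i. Max ((\<lambda>v. v$i + lam v) ` range W))"
      proof (subst vec_eq_iff, intro allI)
        fix i
        have le: "\<forall>y\<in>(\<lambda>v. v$i + lam v) ` range W. y \<le> x$i"
        proof
          fix y assume "y \<in> (\<lambda>v. v$i + lam v) ` range W"
          then obtain l0 where y: "y = W l0 $ i + lam (W l0)" by auto
          have "lam (W l0) \<in> (\<lambda>l. x$l) ` {l. W l = W l0}"
            unfolding lam_def by (rule Max_in) auto
          then obtain l where l: "W l = W l0" "lam (W l0) = x$l" by auto
          show "y \<le> x$i" using key[OF x, of l i] y l by simp
        qed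
        have "lam (W i) \<ge> x$i" unfolding lam_def by (rule Max_ge) auto
        then have mem: "W i $ i + lam (W i) \<ge> x$i" using W(2)[of i] by simp
        have "Max ((\<lambda>v. v$i + lam v) ` range W) = x$i"
        proof (rule antisym)
          show "Max ((\<lambda>v. v$i + lam v) ` range W) \<le> x$i" using le by (subst Max_le_iff) auto
          show "x$i \<le> Max ((\<lambda>v. v$i + lam v) ` range W)"
            using mem by (meson Max_ge UNIV_I finite finite_imageI image_eqI order_trans rangeI)
        qed
        then show "x$i = (\<chi> i. Max ((\<lambda>v. v$i + lam v) ` range W)) $ i" by simp
      qed
      then show "x \<in> tspan (range W)" unfolding tspan_def by blast
    qed
  qed
  then show ?thesis using W(1) by blast
qed

lemma tspan_empty: "x \<in> tspan {} \<Longrightarrow> x = (\<chi> i. Max {})"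
  unfolding tspan_def by simp

lemma tvertices_exist:
  fixes C :: "(real^'n) set"
  assumes "finite C" "C \<noteq> {}"
  shows "\<exists>V. tvertices C V"
proof -
  obtain W :: "'n \<Rightarrow> real^'n" where W: "range W \<subseteq> FW C" "tspan (range W) = FW C"
    using FW_gen[OF assms] by blast
  define P where "P V \<longleftrightarrow> V \<subseteq> range W \<and> tspan V = FW C" for V
  have "P (range W)" using W by (simp add: P_def)
  then obtain V where V: "P V" "\<forall>V'. P V' \<longrightarrow> card V \<le> card V'"
    using ex_has_least_nat[of P "range W" card] by blast
  have fin: "finite V" using V(1) unfolding P_def by (meson finite finite_imageI finite_subset)
  have ne: "V \<noteq> {}"
  proof
    assume "V = {}"
    then have T: "tspan {} = FW C" using V(1) by (simp add: P_def)
    obtain ym where ym: "ym \<in> FW C" using FW_exists[OF assms] by blast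
    have "shift ym 1 \<in> FW C" using FW_shift[OF ym] .
    then have "shift ym 1 = (\<chi> i. Max {})" "ym = (\<chi> i. Max {})" using ym T tspan_empty by auto
    then have "shift ym 1 = ym" by simp
    then show False by (metis add_cancel_left_right one_neq_zero shift_nth)
  qed
  have min: "\<forall>W'. W' \<subset> V \<longrightarrow> tspan W' \<noteq> FW C"
  proof (intro allI impI)
    fix W' assume "W' \<subset> V"
    then have c: "card W' < card V" using fin by (rule psubset_card_mono[rotated])
    show "tspan W' \<noteq> FW C"
    proof
      assume "tspan W' = FW C"
      then have "P W'" using \<open>W' \<subset> V\<close> V(1) unfolding P_def by blast
      then show False using V(2) c by fastforce
    qed
  qed
  show ?thesis unfolding tvertices_def using fin ne V(1) min unfolding P_def by blast
qed

lemma in_tspan: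
  assumes "finite V" "v \<in> V"
  shows "v \<in> tspan V"
proof -
  define B where "B = (\<Sum>u\<in>V. \<Sum>i\<in>UNIV. \<bar>u$i\<bar>) + (\<Sum>i\<in>UNIV. \<bar>v$i\<bar>)"
  define lam where "lam u = (if u = v then 0 else - B)" for u
  have "v = (\<chi> i. Max ((\<lambda>u. u$i + lam u) ` V))"
  proof (subst vec_eq_iff, intro allI)
    fix i
    have le: "u$i + lam u \<le> v$i" if u: "u \<in> V" for u
    proof (cases "u = v")
      case True then show ?thesis by (simp add: lam_def)
    next
      case False
      have "u$i \<le> \<bar>u$i\<bar>" by simp
      also have "\<bar>u$i\<bar> \<le> (\<Sum>i\<in>UNIV. \<bar>u$i\<bar>)" by (rule member_le_sum) auto
      also have "\<dots> \<le> (\<Sum>u\<in>V. \<Sum>i\<in>UNIV. \<bar>u$i\<bar>)"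
        by (rule member_le_sum[OF u _ assms(1)]) (auto intro: sum_nonneg)
      finally have a: "u$i \<le> (\<Sum>u\<in>V. \<Sum>i\<in>UNIV. \<bar>u$i\<bar>)" .
      have "\<bar>v$i\<bar> \<le> (\<Sum>i\<in>UNIV. \<bar>v$i\<bar>)" by (rule member_le_sum) auto
      moreover have "- \<bar>v$i\<bar> \<le> v$i" by simp
      ultimately show ?thesis using a False by (simp add: lam_def B_def)
    qed
    have "Max ((\<lambda>u. u$i + lam u) ` V) = v$i"
    proof (rule Max_eqI)
      show "finite ((\<lambda>u. u$i + lam u) ` V)" using assms by simp
      show "\<And>y. y \<in> (\<lambda>u. u$i + lam u) ` V \<Longrightarrow> y \<le> v$i" using le by auto
      show "v$i \<in> (\<lambda>u. u$i + lam u) ` V" using assms(2) by (force simp: lam_def)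
    qed
    then show "v$i = (\<chi> i. Max ((\<lambda>u. u$i + lam u) ` V)) $ i" by simp
  qed
  then show ?thesis unfolding tspan_def by blast
qed

lemma tdist_avg:
  assumes "finite V" "V \<noteq> {}"
  shows "tdist s ((1 / real (card V)) *\<^sub>R (\<Sum>v\<in>V. v)) \<le> (1 / real (card V)) * (\<Sum>v\<in>V. tdist s v)"
proof -
  define N where "N = real (card V)"
  have N: "N > 0" using assms by (simp add: N_def card_gt_0_iff)
  define a where "a = (1 / N) *\<^sub>R (\<Sum>v\<in>V. v)"
  have ai: "a$i = (1/N) * (\<Sum>v\<in>V. v$i)" for i by (simp add: a_def)
  have si: "s$i - a$i = (1/N) * (\<Sum>v\<in>V. s$i - v$i)" for i
  proof -
    have "(\<Sum>v\<in>V. s$i - v$i) = N * s$i - (\<Sum>v\<in>V. v$i)" by (simp add: sum_subtractf N_def)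
    then show ?thesis using N by (simp add: ai field_simps)
  qed
  have as: "a$i - s$i = (1/N) * (\<Sum>v\<in>V. v$i - s$i)" for i
  proof -
    have "(\<Sum>v\<in>V. v$i - s$i) = - (\<Sum>v\<in>V. s$i - v$i)" by (simp add: sum_negf[symmetric])
    then show ?thesis using si[of i] by simp
  qed
  define X where "X = (\<Sum>v\<in>V. \<Sum>i\<in>UNIV. v$i - s$i)"
  define Y where "Y = (\<Sum>v\<in>V. Max (range (\<lambda>i. s$i - v$i)))"
  have lin: "(\<Sum>i\<in>UNIV. a$i - s$i) = (1/N) * X"
  proof -
    have "(\<Sum>i\<in>UNIV. a$i - s$i) = (\<Sum>i\<in>UNIV. (1/N) * (\<Sum>v\<in>V. v$i - s$i))"
      by (rule sum.cong[OF refl]) (rule as)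
    also have "\<dots> = (1/N) * (\<Sum>i\<in>UNIV. \<Sum>v\<in>V. v$i - s$i)"
      by (simp add: sum_distrib_left)
    also have "\<dots> = (1/N) * X"
      unfolding X_def by (subst sum.swap) (rule refl)
    finally show ?thesis .
  qed
  have mx: "Max (range (\<lambda>i. s$i - a$i)) \<le> (1/N) * Y"
    unfolding Max_range_le_iff
  proof
    fix i
    have "(\<Sum>v\<in>V. s$i - v$i) \<le> Y"
      unfolding Y_def by (rule sum_mono) (rule Max_range_ge)
    then show "s$i - a$i \<le> (1/N) * Y"
      unfolding si using N by (simp add: divide_right_mono)
  qed
  have T: "(\<Sum>v\<in>V. tdist s v) = X + real CARD('a) * Y"
    unfolding X_def Y_def tdist_def by (simp add: sum.distrib sum_distrib_left)
  have "tdist s a = (\<Sum>i\<in>UNIV. a$i - s$i) + real CARD('a) * Max (range (\<lambda>i. s$i - a$i))"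
    by (simp add: tdist_def)
  also have "\<dots> \<le> (1/N) * X + real CARD('a) * ((1/N) * Y)"
    unfolding lin by (intro add_left_mono mult_left_mono mx) simp
  also have "\<dots> = (1/N) * (\<Sum>v\<in>V. tdist s v)"
    unfolding T by (simp add: distrib_left)
  finally show ?thesis unfolding a_def N_def .
qed

lemma tmedian_opt:
  assumes "finite C" "C \<noteq> {}"
  shows "(\<Sum>s\<in>C. tdist s (tmedian C)) \<le> (\<Sum>s\<in>C. tdist s z)"
proof -
  have "\<exists>m. \<exists>V. tvertices C V \<and> m = (1 / real (card V)) *\<^sub>R (\<Sum>v\<in>V. v)"
    using tvertices_exist[OF assms] by blast
  from someI_ex[OF this] obtain V where V: "tvertices C V"
    "tmedian C = (1 / real (card V)) *\<^sub>R (\<Sum>v\<in>V. v)"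
    unfolding tmedian_def by blast
  have fin: "finite V" and ne: "V \<noteq> {}" and sp: "tspan V = FW C" using V(1) unfolding tvertices_def by auto
  have VF: "v \<in> FW C" if "v \<in> V" for v using in_tspan[OF fin that] sp by simp
  have "(\<Sum>s\<in>C. tdist s (tmedian C)) \<le> (\<Sum>s\<in>C. (1 / real (card V)) * (\<Sum>v\<in>V. tdist s v))"
    unfolding V(2) by (rule sum_mono) (rule tdist_avg[OF fin ne])
  also have "\<dots> = (1 / real (card V)) * (\<Sum>v\<in>V. fsum C v)"
    by (simp add: fsum_def sum_distrib_left sum.swap[of _ C V])
  also have "\<dots> \<le> (1 / real (card V)) * (\<Sum>v\<in>V. fsum C z)"
    using VF by (intro mult_left_mono sum_mono) (auto simp: FW_iff)
  also have "\<dots> = fsum C z" using fin ne by (simp add: card_gt_0_iff)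
  finally show ?thesis unfolding fsum_def .
qed


definition cost :: "(real^'n) set \<Rightarrow> (real^'n \<Rightarrow> nat) \<Rightarrow> (nat \<Rightarrow> real^'n) \<Rightarrow> real" where
  "cost S a c = (\<Sum>s\<in>S. tdist s (c (a s)))"

lemma cost_clusters:
  assumes "finite S" "\<forall>s\<in>S. a s < k"
  shows "cost S a c = (\<Sum>j<k. \<Sum>s\<in>cluster S a j. tdist s (c j))"
proof -
  have g: "(\<Sum>j\<in>{..<k}. \<Sum>s\<in>cluster S a j. tdist s (c (a s))) = cost S a c"
    unfolding cluster_def cost_def by (rule sum.group) (use assms in auto)
  have "(\<Sum>j\<in>{..<k}. \<Sum>s\<in>cluster S a j. tdist s (c (a s))) = (\<Sum>j<k. \<Sum>s\<in>cluster S a j. tdist s (c j))"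
    by (intro sum.cong refl) (auto simp: cluster_def)
  then show ?thesis using g by simp
qed

lemma cluster_finite: "finite S \<Longrightarrow> finite (cluster S a j)"
  unfolding cluster_def by simp

lemma mstep_le:
  assumes "finite S" "\<forall>s\<in>S. a s < k"
  shows "cost S a (mstep S c a) \<le> cost S a c"
proof -
  have "(\<Sum>j<k. \<Sum>s\<in>cluster S a j. tdist s (mstep S c a j)) \<le> (\<Sum>j<k. \<Sum>s\<in>cluster S a j. tdist s (c j))"
  proof (rule sum_mono)
    fix j
    show "(\<Sum>s\<in>cluster S a j. tdist s (mstep S c a j)) \<le> (\<Sum>s\<in>cluster S a j. tdist s (c j))"
    proof (cases "cluster S a j = {}")
      case True then show ?thesis by simp
    next
      case False
      then show ?thesis unfolding mstep_def using False tmedian_opt[OF cluster_finite[OF assms(1)] False] by simp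
    qed
  qed
  then show ?thesis using cost_clusters[OF assms] by metis
qed

lemma assign_le:
  assumes "valid_assign S k c a'" "\<forall>s\<in>S. a s < k"
  shows "cost S a' c \<le> cost S a c"
  unfolding cost_def by (rule sum_mono) (use assms in \<open>auto simp: valid_assign_def\<close>)

lemma kloss_le_cost:
  assumes "finite S" "\<forall>s\<in>S. a s < k"
  shows "kloss S k a \<le> cost S a c"
proof -
  have "kloss S k a \<le> (\<Sum>j<k. \<Sum>s\<in>cluster S a j. tdist s (c j))"
    unfolding kloss_def
  proof (rule sum_mono)
    fix j
    show "(\<Sum>s\<in>cluster S a j. tdist s (tmedian (cluster S a j))) \<le> (\<Sum>s\<in>cluster S a j. tdist s (c j))"
    proof (cases "cluster S a j = {}")
      case True then show ?thesis by simp
    next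
      case False
      then show ?thesis using tmedian_opt[OF cluster_finite[OF assms(1)] False] by simp
    qed
  qed
  then show ?thesis using cost_clusters[OF assms] by metis
qed

lemma valid_cost_le_Min:
  assumes "valid_assign S k c a"
  shows "cost S a c \<le> (\<Sum>s\<in>S. Min ((\<lambda>i. tdist s (c i)) ` {..<k}))"
  unfolding cost_def
proof (rule sum_mono)
  fix s assume s: "s \<in> S"
  then have "a s < k" "\<forall>i<k. tdist s (c (a s)) \<le> tdist s (c i)" using assms by (auto simp: valid_assign_def)
  then show "tdist s (c (a s)) \<le> Min ((\<lambda>i. tdist s (c i)) ` {..<k})"
    by (subst Min_ge_iff) auto
qed

lemma kmeans_bound:
  assumes "finite S" "kmeans_output S k c0 a"
  shows "kloss S k a \<le> (\<Sum>s\<in>S. Min ((\<lambda>i. tdist s (c0 i)) ` {..<k}))"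
proof -
  obtain m cs as where m: "m \<ge> 1" "cs 0 = c0"
    "\<forall>t\<le>m. valid_assign S k (cs t) (as t)"
    "\<forall>t<m. cs (Suc t) = mstep S (cs t) (as t)" "a = as m"
    using assms(2) unfolding kmeans_output_def by blast
  have lt: "\<forall>s\<in>S. as t s < k" if "t \<le> m" for t using m(3) that by (auto simp: valid_assign_def)
  have chain: "t \<le> m \<Longrightarrow> cost S (as t) (cs t) \<le> cost S (as 0) (cs 0)" for t
  proof (induction t)
    case 0 then show ?case by simp
  next
    case (Suc t)
    have "cost S (as (Suc t)) (cs (Suc t)) \<le> cost S (as t) (cs (Suc t))"
      by (rule assign_le) (use m(3) Suc.prems lt in auto)
    also have "\<dots> = cost S (as t) (mstep S (cs t) (as t))" using m(4) Suc.prems by simp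
    also have "\<dots> \<le> cost S (as t) (cs t)" by (rule mstep_le[OF assms(1) lt]) (use Suc.prems in simp)
    also have "\<dots> \<le> cost S (as 0) (cs 0)" using Suc by simp
    finally show ?case .
  qed
  have "kloss S k a \<le> cost S (as m) (cs m)" unfolding m(5) by (rule kloss_le_cost[OF assms(1) lt]) simp
  also have "\<dots> \<le> cost S (as 0) (cs 0)" by (rule chain) simp
  also have "\<dots> \<le> (\<Sum>s\<in>S. Min ((\<lambda>i. tdist s (c0 i)) ` {..<k}))"
    using valid_cost_le_Min m(2,3) by force
  finally show ?thesis .
qed

lemma Min_nth_Dmin:
  assumes "length cs = k"
  shows "Min ((\<lambda>i. tdist s (cs ! i)) ` {..<k}) = Dmin cs s"
proof -
  have "(\<lambda>i. tdist s (cs ! i)) ` {..<k} = (\<lambda>c. tdist s c) ` set cs"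
    using assms by (auto simp: set_conv_nth image_iff)
  then show ?thesis unfolding Dmin_def by simp
qed

definition pot :: "(real^'n) list \<Rightarrow> (real^'n) set \<Rightarrow> real" where
  "pot cs X = (\<Sum>s\<in>X. Dmin cs s)"

fun ext :: "(real^'n) set \<Rightarrow> nat \<Rightarrow> (real^'n) list \<Rightarrow> (real^'n) list pmf" where
  "ext S 0 cs = return_pmf cs"
| "ext S (Suc t) cs = bind_pmf (kpp_next S cs) (\<lambda>x. ext S t (cs @ [x]))"

lemma ext_Suc': "ext S (Suc t) cs = bind_pmf (ext S t cs) (\<lambda>l. map_pmf (\<lambda>x. l @ [x]) (kpp_next S l))"
proof (induction t arbitrary: cs)
  case 0
  show ?case by (simp add: map_pmf_def bind_return_pmf)
next
  case (Suc t)
  have "ext S (Suc (Suc t)) cs = bind_pmf (kpp_next S cs) (\<lambda>x. ext S (Suc t) (cs @ [x]))" by simp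
  also have "\<dots> = bind_pmf (kpp_next S cs) (\<lambda>x. bind_pmf (ext S t (cs@[x])) (\<lambda>l. map_pmf (\<lambda>y. l @ [y]) (kpp_next S l)))"
    by (simp only: Suc.IH)
  also have "\<dots> = bind_pmf (ext S (Suc t) cs) (\<lambda>l. map_pmf (\<lambda>x. l @ [x]) (kpp_next S l))"
    by (simp add: bind_assoc_pmf)
  finally show ?case .
qed

lemma kpp_seeds_ext: "kpp_seeds S t = ext S t []"
proof (induction t)
  case 0 then show ?case by simp
next
  case (Suc t) then show ?case by (simp del: ext.simps add: ext_Suc')
qed

lemma Dmin_nonneg: "cs \<noteq> [] \<Longrightarrow> 0 \<le> Dmin cs s"
  unfolding Dmin_def by (subst Min_ge_iff) (auto simp: tdist_nonneg)

lemma pot_nonneg: "cs \<noteq> [] \<Longrightarrow> 0 \<le> pot cs X"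
  unfolding pot_def by (rule sum_nonneg) (simp add: Dmin_nonneg)

lemma Dmin_snoc: "cs \<noteq> [] \<Longrightarrow> Dmin (cs @ [x]) s = min (Dmin cs s) (tdist s x)"
  unfolding Dmin_def by (simp add: min.commute)

lemma Dmin_single: "Dmin [x] s = tdist s x"
  unfolding Dmin_def by simp

lemma pot_single: "pot [x] X = (\<Sum>s\<in>X. tdist s x)"
  unfolding pot_def Dmin_single ..

lemma pot_snoc_le: "cs \<noteq> [] \<Longrightarrow> pot (cs @ [x]) X \<le> pot cs X"
  unfolding pot_def by (rule sum_mono) (simp add: Dmin_snoc)

lemma pot_snoc_le2: "cs \<noteq> [] \<Longrightarrow> pot (cs @ [x]) X \<le> (\<Sum>s\<in>X. tdist s x)"
  unfolding pot_def by (rule sum_mono) (simp add: Dmin_snoc)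

lemma Dmin_tri:
  assumes "cs \<noteq> []"
  shows "Dmin cs a \<le> tdist a b + Dmin cs b"
proof -
  have "Dmin cs b \<in> (\<lambda>c. tdist b c) ` set cs" unfolding Dmin_def
    by (rule Min_in) (use assms in auto)
  then obtain c' where c': "c' \<in> set cs" "Dmin cs b = tdist b c'" by auto
  have "Dmin cs a \<le> tdist a c'" unfolding Dmin_def by (rule Min_le) (use c' in auto)
  also have "\<dots> \<le> tdist a b + tdist b c'" by (rule tdist_triangle)
  finally show ?thesis using c' by simp
qed

lemma next_pmf:
  assumes "finite S" "cs \<noteq> []" "pot cs S \<noteq> 0"
  shows "pmf (kpp_next S cs) s = (if s \<in> S then Dmin cs s / pot cs S else 0)"
proof -
  define f where "f = (\<lambda>s. if s \<in> S then Dmin cs s / pot cs S else 0)"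
  have nn: "\<And>x. 0 \<le> f x" using assms by (auto simp: f_def intro!: divide_nonneg_nonneg Dmin_nonneg pot_nonneg)
  have "(\<integral>\<^sup>+x. ennreal (f x) \<partial>count_space UNIV) = (\<integral>\<^sup>+x. ennreal (f x) \<partial>count_space S)"
    by (subst nn_integral_count_space_indicator) (auto intro!: nn_integral_cong simp: f_def split: split_indicator)
  also have "\<dots> = (\<Sum>x\<in>S. ennreal (f x))" by (rule nn_integral_count_space_finite[OF assms(1)])
  also have "\<dots> = ennreal (\<Sum>x\<in>S. f x)" using nn by simp
  also have "(\<Sum>x\<in>S. f x) = 1"
  proof -
    have "(\<Sum>x\<in>S. f x) = (\<Sum>x\<in>S. Dmin cs x / pot cs S)" by (rule sum.cong) (auto simp: f_def)
    also have "\<dots> = pot cs S / pot cs S" by (simp add: pot_def sum_divide_distrib[symmetric])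
    finally show ?thesis using assms(3) by simp
  qed
  finally have prob: "(\<integral>\<^sup>+x. ennreal (f x) \<partial>count_space UNIV) = 1" by simp
  have "kpp_next S cs = embed_pmf f" using assms unfolding kpp_next_def f_def pot_def by simp
  then show ?thesis using pmf_embed_pmf[OF nn prob] by (simp add: f_def)
qed

lemma next_set:
  assumes "finite S" "S \<noteq> {}"
  shows "set_pmf (kpp_next S cs) \<subseteq> S"
proof (cases "cs = [] \<or> pot cs S = 0")
  case True
  then have "kpp_next S cs = pmf_of_set S" unfolding kpp_next_def pot_def by auto
  then show ?thesis using assms by simp
next
  case False
  show ?thesis
  proof
    fix x assume "x \<in> set_pmf (kpp_next S cs)"
    then have "pmf (kpp_next S cs) x \<noteq> 0" by (simp add: set_pmf_iff)
    then show "x \<in> S" using next_pmf[OF assms(1)] False by (auto split: if_splits)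
  qed
qed

lemma exp_next:
  assumes "finite S" "cs \<noteq> []" "pot cs S \<noteq> 0"
  shows "measure_pmf.expectation (kpp_next S cs) h = (\<Sum>s\<in>S. Dmin cs s / pot cs S * h s)"
proof -
  have ne: "S \<noteq> {}" using assms(3) unfolding pot_def by auto
  have "measure_pmf.expectation (kpp_next S cs) h = (\<Sum>s\<in>S. h s * pmf (kpp_next S cs) s)"
    by (rule integral_measure_pmf_real[OF assms(1)]) (use next_set[OF assms(1) ne] in auto)
  also have "\<dots> = (\<Sum>s\<in>S. Dmin cs s / pot cs S * h s)"
    by (rule sum.cong) (auto simp: next_pmf[OF assms])
  finally show ?thesis .
qed

lemma exp_bind:
  fixes f :: "'b \<Rightarrow> real"
  assumes "finite (set_pmf M)" "\<And>x. x \<in> set_pmf M \<Longrightarrow> finite (set_pmf (N x))"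
  shows "measure_pmf.expectation (bind_pmf M N) f = measure_pmf.expectation M (\<lambda>x. measure_pmf.expectation (N x) f)"
proof -
  define B where "B = (\<Union>x\<in>set_pmf M. set_pmf (N x))"
  have fB: "finite B" using assms by (simp add: B_def)
  have "measure_pmf.expectation (bind_pmf M N) f = (\<Sum>y\<in>B. f y * pmf (bind_pmf M N) y)"
    by (rule integral_measure_pmf_real[OF fB]) (auto simp: B_def set_bind_pmf)
  also have "\<dots> = (\<Sum>y\<in>B. f y * (\<Sum>x\<in>set_pmf M. pmf (N x) y * pmf M x))"
  proof (rule sum.cong[OF refl])
    fix y
    have "pmf (bind_pmf M N) y = measure_pmf.expectation M (\<lambda>x. pmf (N x) y)" by (rule pmf_bind)
    also have "\<dots> = (\<Sum>x\<in>set_pmf M. pmf (N x) y * pmf M x)"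
      by (rule integral_measure_pmf_real[OF assms(1)]) auto
    finally show "f y * pmf (bind_pmf M N) y = f y * (\<Sum>x\<in>set_pmf M. pmf (N x) y * pmf M x)" by simp
  qed
  also have "\<dots> = (\<Sum>y\<in>B. \<Sum>x\<in>set_pmf M. f y * pmf (N x) y * pmf M x)"
    by (simp add: sum_distrib_left mult.assoc)
  also have "\<dots> = (\<Sum>x\<in>set_pmf M. \<Sum>y\<in>B. f y * pmf (N x) y * pmf M x)"
    by (rule sum.swap)
  also have "\<dots> = (\<Sum>x\<in>set_pmf M. (\<Sum>y\<in>B. f y * pmf (N x) y) * pmf M x)"
    by (simp add: sum_distrib_right)
  also have "\<dots> = (\<Sum>x\<in>set_pmf M. measure_pmf.expectation (N x) f * pmf M x)"
  proof (rule sum.cong[OF refl])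
    fix x assume x: "x \<in> set_pmf M"
    have "measure_pmf.expectation (N x) f = (\<Sum>y\<in>B. f y * pmf (N x) y)"
      by (rule integral_measure_pmf_real[OF fB]) (use x in \<open>auto simp: B_def\<close>)
    then show "(\<Sum>y\<in>B. f y * pmf (N x) y) * pmf M x = measure_pmf.expectation (N x) f * pmf M x" by simp
  qed
  also have "\<dots> = measure_pmf.expectation M (\<lambda>x. measure_pmf.expectation (N x) f)"
    by (rule integral_measure_pmf_real[OF assms(1), symmetric]) auto
  finally show ?thesis .
qed

lemma exp_mono:
  fixes f g :: "'b \<Rightarrow> real"
  assumes "finite (set_pmf M)" "\<And>x. x \<in> set_pmf M \<Longrightarrow> f x \<le> g x"
  shows "measure_pmf.expectation M f \<le> measure_pmf.expectation M g"
  by (rule integral_mono_AE) (auto simp: integrable_measure_pmf_finite[OF assms(1)] AE_measure_pmf_iff assms(2))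

lemma exp_const: "measure_pmf.expectation M (\<lambda>_. a) = (a::real)"
  by simp

lemma exp_return: "measure_pmf.expectation (return_pmf x) f = (f x :: real)"
  by (subst integral_measure_pmf_real[of "{x}"]) auto

lemma next_fin: "finite S \<Longrightarrow> S \<noteq> {} \<Longrightarrow> finite (set_pmf (kpp_next S cs))"
  using next_set finite_subset by blast

lemma ext_fin: "finite S \<Longrightarrow> S \<noteq> {} \<Longrightarrow> finite (set_pmf (ext S t cs))"
  by (induction t arbitrary: cs) (auto simp: set_bind_pmf next_fin)

lemma ext_len: "l \<in> set_pmf (ext S t cs) \<Longrightarrow> length l = length cs + t"
  by (induction t arbitrary: cs) (auto simp: set_bind_pmf)

definition Ephi :: "(real^'n) set \<Rightarrow> nat \<Rightarrow> (real^'n) list \<Rightarrow> real" where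
  "Ephi S t cs = measure_pmf.expectation (ext S t cs) (\<lambda>l. pot l S)"

lemma Ephi_0: "Ephi S 0 cs = pot cs S"
  unfolding Ephi_def by (simp add: exp_return)

lemma Ephi_Suc:
  assumes "finite S" "S \<noteq> {}"
  shows "Ephi S (Suc t) cs = measure_pmf.expectation (kpp_next S cs) (\<lambda>x. Ephi S t (cs @ [x]))"
  unfolding Ephi_def ext.simps
  by (rule exp_bind) (simp_all add: next_fin[OF assms] ext_fin[OF assms])

lemma Ephi_le_pot:
  assumes "finite S" "S \<noteq> {}"
  shows "cs \<noteq> [] \<Longrightarrow> Ephi S t cs \<le> pot cs S"
proof (induction t arbitrary: cs)
  case 0 then show ?case by (simp add: Ephi_0)
next
  case (Suc t)
  have "Ephi S (Suc t) cs = measure_pmf.expectation (kpp_next S cs) (\<lambda>x. Ephi S t (cs @ [x]))"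
    by (rule Ephi_Suc[OF assms])
  also have "\<dots> \<le> measure_pmf.expectation (kpp_next S cs) (\<lambda>x. pot cs S)"
  proof (rule exp_mono[OF next_fin[OF assms]])
    fix x
    have "Ephi S t (cs @ [x]) \<le> pot (cs @ [x]) S" by (rule Suc.IH) simp
    also have "\<dots> \<le> pot cs S" by (rule pot_snoc_le[OF Suc.prems])
    finally show "Ephi S t (cs @ [x]) \<le> pot cs S" .
  qed
  also have "\<dots> = pot cs S" by simp
  finally show ?case .
qed

lemma L31:
  fixes y :: "real^'n"
  assumes "finite A"
  shows "(\<Sum>a\<in>A. \<Sum>s\<in>A. tdist s a) \<le> real CARD('n) * real (card A) * (\<Sum>s\<in>A. tdist s y)"
proof -
  define N where "N = real (card A)"
  define Ov where "Ov = (\<Sum>s\<in>A. tdist s y)"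
  have 1: "(\<Sum>a\<in>A. \<Sum>s\<in>A. tdist s a) \<le> (\<Sum>a\<in>A. \<Sum>s\<in>A. tdist s y + tdist y a)"
    by (intro sum_mono tdist_triangle)
  have 2: "(\<Sum>a\<in>A. \<Sum>s\<in>A. tdist s y + tdist y a) = N * Ov + N * (\<Sum>a\<in>A. tdist y a)"
    by (simp add: sum.distrib N_def Ov_def sum_distrib_left)
  have 3: "(\<Sum>a\<in>A. tdist y a) \<le> (real CARD('n) - 1) * Ov"
    unfolding Ov_def sum_distrib_left by (intro sum_mono tdist_swap)
  have N0: "N \<ge> 0" by (simp add: N_def)
  have "N * (\<Sum>a\<in>A. tdist y a) \<le> N * ((real CARD('n) - 1) * Ov)" by (rule mult_left_mono[OF 3 N0])
  then show ?thesis using 1 2 unfolding N_def[symmetric] Ov_def[symmetric] by (simp add: algebra_simps)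
qed

lemma L32:
  fixes y :: "real^'n"
  assumes "finite A" "cs \<noteq> []"
  shows "(\<Sum>a\<in>A. Dmin cs a * pot (cs @ [a]) A) \<le> 2 * real CARD('n) * pot cs A * (\<Sum>s\<in>A. tdist s y)"
proof (cases "A = {}")
  case True then show ?thesis by simp
next
  case False
  define N where "N = real (card A)"
  have N: "N > 0" using False assms(1) by (simp add: N_def card_gt_0_iff)
  define P where "P = pot cs A"
  have P0: "P \<ge> 0" unfolding P_def by (rule pot_nonneg[OF assms(2)])
  have Da: "N * Dmin cs a \<le> (\<Sum>s\<in>A. tdist a s) + P" for a
  proof -
    have "N * Dmin cs a = (\<Sum>s\<in>A. Dmin cs a)" by (simp add: N_def)
    also have "\<dots> \<le> (\<Sum>s\<in>A. tdist a s + Dmin cs s)" by (intro sum_mono Dmin_tri[OF assms(2)])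
    also have "\<dots> = (\<Sum>s\<in>A. tdist a s) + P" by (simp add: sum.distrib P_def pot_def)
    finally show ?thesis .
  qed
  have step: "N * (Dmin cs a * pot (cs @ [a]) A) \<le> P * (\<Sum>s\<in>A. tdist a s + tdist s a)" for a
  proof -
    have pa0: "0 \<le> pot (cs @ [a]) A" by (rule pot_nonneg) simp
    have pa1: "pot (cs @ [a]) A \<le> P" unfolding P_def by (rule pot_snoc_le[OF assms(2)])
    have pa2: "pot (cs @ [a]) A \<le> (\<Sum>s\<in>A. tdist s a)" by (rule pot_snoc_le2[OF assms(2)])
    have d0: "0 \<le> (\<Sum>s\<in>A. tdist a s)" by (rule sum_nonneg) (simp add: tdist_nonneg)
    have "N * (Dmin cs a * pot (cs @ [a]) A) = (N * Dmin cs a) * pot (cs @ [a]) A" by simp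
    also have "\<dots> \<le> ((\<Sum>s\<in>A. tdist a s) + P) * pot (cs @ [a]) A"
      by (rule mult_right_mono[OF Da pa0])
    also have "\<dots> = (\<Sum>s\<in>A. tdist a s) * pot (cs @ [a]) A + P * pot (cs @ [a]) A"
      by (simp add: algebra_simps)
    also have "\<dots> \<le> (\<Sum>s\<in>A. tdist a s) * P + P * (\<Sum>s\<in>A. tdist s a)"
      by (intro add_mono mult_left_mono pa1 pa2 d0 P0)
    also have "\<dots> = P * (\<Sum>s\<in>A. tdist a s + tdist s a)" by (simp add: sum.distrib algebra_simps)
    finally show ?thesis .
  qed
  have "N * (\<Sum>a\<in>A. Dmin cs a * pot (cs @ [a]) A) = (\<Sum>a\<in>A. N * (Dmin cs a * pot (cs @ [a]) A))"
    by (simp add: sum_distrib_left)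
  also have "\<dots> \<le> (\<Sum>a\<in>A. P * (\<Sum>s\<in>A. tdist a s + tdist s a))" by (intro sum_mono step)
  also have "\<dots> = P * (\<Sum>a\<in>A. \<Sum>s\<in>A. tdist a s + tdist s a)" by (simp add: sum_distrib_left)
  also have "\<dots> \<le> P * (2 * N * real CARD('n) * (\<Sum>s\<in>A. tdist s y))"
  proof (rule mult_left_mono[OF _ P0])
    define e where "e x = tdist x y + tdist y x" for x
    have "(\<Sum>a\<in>A. \<Sum>s\<in>A. tdist a s + tdist s a) \<le> (\<Sum>a\<in>A. \<Sum>s\<in>A. e a + e s)"
    proof (intro sum_mono)
      fix a s
      have "tdist a s \<le> tdist a y + tdist y s" by (rule tdist_triangle)
      moreover have "tdist s a \<le> tdist s y + tdist y a" by (rule tdist_triangle)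
      ultimately show "tdist a s + tdist s a \<le> e a + e s" unfolding e_def by linarith
    qed
    also have "\<dots> = (\<Sum>a\<in>A. N * e a + (\<Sum>s\<in>A. e s))"
      by (simp add: sum.distrib N_def)
    also have "\<dots> = N * (\<Sum>x\<in>A. e x) + N * (\<Sum>x\<in>A. e x)"
      by (simp add: sum.distrib sum_distrib_left[symmetric] N_def)
    also have "\<dots> = 2 * N * (\<Sum>x\<in>A. e x)" by simp
    also have "\<dots> \<le> 2 * N * (\<Sum>x\<in>A. real CARD('n) * tdist x y)"
      unfolding e_def using N by (intro mult_left_mono sum_mono tdist_swap_sum) auto
    also have "\<dots> = 2 * N * real CARD('n) * (\<Sum>s\<in>A. tdist s y)" by (simp add: sum_distrib_left mult.assoc)
    finally show "(\<Sum>a\<in>A. \<Sum>s\<in>A. tdist a s + tdist s a) \<le> 2 * N * real CARD('n) * (\<Sum>s\<in>A. tdist s y)" .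
  qed
  finally have "N * (\<Sum>a\<in>A. Dmin cs a * pot (cs @ [a]) A) \<le> N * (2 * real CARD('n) * P * (\<Sum>s\<in>A. tdist s y))"
    by (simp add: algebra_simps)
  then show ?thesis using N unfolding P_def by simp
qed

lemma alg_final:
  fixes c0 x phi Op H u t E S2 :: real
  assumes phi: "phi = c0 + x" "phi > 0" and c0: "c0 \<ge> 0" and x: "x \<ge> 0" and Op: "Op \<ge> 0"
    and t: "t \<ge> 0" and u: "u \<ge> t + 1" and pm: "x^2 \<le> S2 * u"
    and E: "E \<le> (c0/phi) * ((c0 + Op) * H + ((u - t)/u) * x)
                + (1/phi) * ((c0 + Op) * H * x + ((u - 1 - t)/(u - 1)) * (x * x - S2))"
  shows "E \<le> (c0 + Op) * (H + 1/(t+1)) + ((u - (t+1))/u) * x"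
proof -
  have u0: "u > 0" using u t by linarith
  have Q: "((u - 1 - t)/(u - 1)) * (x * x - S2) \<le> ((u - 1 - t)/u) * (x * x)"
  proof (cases "u = 1")
    case True
    then have "t = 0" using t u by linarith
    then show ?thesis using True by simp
  next
    case False
    then have u1: "u - 1 > 0" using u t by linarith
    have "x * x - S2 \<le> x * x - x * x / u" using pm u0 by (simp add: power2_eq_square field_simps)
    also have "\<dots> = (x * x) * (u - 1) / u" using u0 by (simp add: field_simps)
    finally have h: "x * x - S2 \<le> (x * x) * (u - 1) / u" .
    have q0: "(u - 1 - t)/(u - 1) \<ge> 0" using u1 u by simp
    have "((u - 1 - t)/(u - 1)) * (x * x - S2) \<le> ((u - 1 - t)/(u - 1)) * ((x * x) * (u - 1) / u)"
      by (rule mult_left_mono[OF h q0])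
    also have "\<dots> = ((u - 1 - t)/u) * (x * x)" using u1 u0 by (simp add: field_simps)
    finally show ?thesis .
  qed
  have "E \<le> (c0/phi) * ((c0 + Op) * H + ((u - t)/u) * x)
                + (1/phi) * ((c0 + Op) * H * x + ((u - 1 - t)/u) * (x * x))"
  proof -
    have "(1/phi) * ((c0 + Op) * H * x + ((u - 1 - t)/(u - 1)) * (x * x - S2))
       \<le> (1/phi) * ((c0 + Op) * H * x + ((u - 1 - t)/u) * (x * x))"
      using Q phi(2) by (intro mult_left_mono) auto
    then show ?thesis using E by linarith
  qed
  also have "\<dots> = (c0 + Op) * H + ((u - 1 - t)/u) * x + (c0 * x) / (u * phi)"
  proof -
    have ne1: "phi \<noteq> 0" "u \<noteq> 0" using phi u0 by auto
    show ?thesis using ne1 by (simp add: field_simps) (simp add: phi(1) algebra_simps)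
  qed
  also have "(c0 * x) / (u * phi) \<le> c0 / u"
  proof -
    have "c0 * x \<le> c0 * phi" using phi c0 x by (intro mult_left_mono) auto
    then have "(c0 * x) / (u * phi) \<le> (c0 * phi) / (u * phi)"
      using u0 phi by (intro divide_right_mono) auto
    also have "(c0 * phi) / (u * phi) = c0 / u" using u0 phi by simp
    finally show ?thesis .
  qed
  also have "c0 / u \<le> c0 / (t + 1)" using c0 u t by (intro divide_left_mono) auto
  also have "c0 / (t + 1) \<le> (c0 + Op) / (t + 1)" using Op t by (intro divide_right_mono) auto
  finally show ?thesis using t by (simp add: field_simps)
qed

context
  fixes S :: "(real^'n) set" and g :: "real^'n \<Rightarrow> nat" and c :: "nat \<Rightarrow> real^'n"
  assumes finS: "finite S" and neS: "S \<noteq> {}"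
begin

definition "Acl j = {s\<in>S. g s = j}"
definition "Xu U = {s\<in>S. g s \<in> U}"
definition "Xc U = {s\<in>S. g s \<notin> U}"
definition "OPT X = (\<Sum>s\<in>X. tdist s (c (g s)))"

lemma OPT_nonneg: "0 \<le> OPT X"
  unfolding OPT_def by (rule sum_nonneg) (simp add: tdist_nonneg)

lemma fin_Acl: "finite (Acl j)" unfolding Acl_def using finS by simp
lemma fin_Xu: "finite (Xu U)" unfolding Xu_def using finS by simp
lemma fin_Xc: "finite (Xc U)" unfolding Xc_def using finS by simp

lemma sum_S_split:
  fixes h :: "real^'n \<Rightarrow> real"
  shows "(\<Sum>s\<in>S. h s) = (\<Sum>s\<in>Xc U. h s) + (\<Sum>s\<in>Xu U. h s)"
proof -
  have e: "S = Xc U \<union> Xu U" and d: "Xc U \<inter> Xu U = {}" unfolding Xc_def Xu_def by auto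
  have "(\<Sum>s\<in>Xc U \<union> Xu U. h s) = (\<Sum>s\<in>Xc U. h s) + (\<Sum>s\<in>Xu U. h s)"
    by (rule sum.union_disjoint[OF fin_Xc fin_Xu d])
  then show ?thesis using e by simp
qed

lemma sum_Xu_group: fixes h :: "real^'n \<Rightarrow> real" shows "finite U \<Longrightarrow> (\<Sum>s\<in>Xu U. h s) = (\<Sum>j\<in>U. \<Sum>s\<in>Acl j. h s)"
proof -
  assume U: "finite U"
  have "(\<Sum>j\<in>U. \<Sum>s\<in>{x\<in>Xu U. g x = j}. h s) = (\<Sum>s\<in>Xu U. h s)"
    by (rule sum.group[OF fin_Xu U]) (auto simp: Xu_def)
  moreover have "\<And>j. j \<in> U \<Longrightarrow> {x\<in>Xu U. g x = j} = Acl j" by (auto simp: Xu_def Acl_def)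
  ultimately show ?thesis by simp
qed

lemma Xu_remove: "j \<in> U \<Longrightarrow> Xu (U - {j}) = Xu U - Acl j"
  by (auto simp: Xu_def Acl_def)
lemma Xc_remove: "j \<in> U \<Longrightarrow> Xc (U - {j}) = Xc U \<union> Acl j"
  by (auto simp: Xc_def Acl_def)
lemma Acl_sub: "j \<in> U \<Longrightarrow> Acl j \<subseteq> Xu U"
  by (auto simp: Xu_def Acl_def)
lemma Xc_Acl_disj: "j \<in> U \<Longrightarrow> Xc U \<inter> Acl j = {}"
  by (auto simp: Xc_def Acl_def)

lemma sum_diff_Acl: fixes h :: "real^'n \<Rightarrow> real" assumes "j \<in> U" shows "(\<Sum>s\<in>Xu U - Acl j. h s) = (\<Sum>s\<in>Xu U. h s) - (\<Sum>s\<in>Acl j. h s)"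
  by (rule sum_diff[OF fin_Xu Acl_sub[OF assms]])

lemma sum_Xc_Acl: fixes h :: "real^'n \<Rightarrow> real" assumes "j \<in> U" shows "(\<Sum>s\<in>Xc U \<union> Acl j. h s) = (\<Sum>s\<in>Xc U. h s) + (\<Sum>s\<in>Acl j. h s)"
  by (rule sum.union_disjoint[OF fin_Xc fin_Acl Xc_Acl_disj[OF assms]])

lemma OPT_Acl: "OPT (Acl j) = (\<Sum>s\<in>Acl j. tdist s (c j))"
  unfolding OPT_def by (rule sum.cong) (auto simp: Acl_def)

lemma AV:
  "cs \<noteq> [] \<Longrightarrow> finite U \<Longrightarrow> t \<le> card U \<Longrightarrow>
   Ephi S t cs \<le> (pot cs (Xc U) + 2 * real CARD('n) * OPT (Xu U)) * (1 + harm t)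
      + ((real (card U) - real t) / real (card U)) * pot cs (Xu U)"
proof (induction t arbitrary: cs U)
  case 0
  have "Ephi S 0 cs = pot cs (Xc U) + pot cs (Xu U)" unfolding Ephi_0 pot_def by (rule sum_S_split)
  moreover have "pot cs (Xu U) \<le> ((real (card U) - real 0) / real (card U)) * pot cs (Xu U)"
  proof (cases "card U = 0")
    case True
    then have "U = {}" using 0 by simp
    then show ?thesis by (simp add: Xu_def pot_def)
  next
    case False then show ?thesis by simp
  qed
  moreover have "0 \<le> 2 * real CARD('n) * OPT (Xu U)" by (simp add: OPT_nonneg)
  moreover have "harm 0 = (0::real)" by (simp add: harm_def)
  then have "(pot cs (Xc U) + 2 * real CARD('n) * OPT (Xu U)) * (1 + harm 0) = pot cs (Xc U) + 2 * real CARD('n) * OPT (Xu U)"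
    by simp
  ultimately show ?case by linarith
next
  case (Suc t)
  define u where "u = card U"
  have tu: "t < u" using Suc.prems unfolding u_def by simp
  define n where "n = real CARD('n)"
  define phi where "phi = pot cs S"
  define H where "H = (1 + harm t :: real)"
  define c0 where "c0 = pot cs (Xc U)"
  define x where "x = pot cs (Xu U)"
  define Ou where "Ou = OPT (Xu U)"
  define w where "w s = Dmin cs s / phi" for s
  define F where "F s = Ephi S t (cs @ [s])" for s
  have hn: "(0::real) \<le> harm t" by (rule harm_nonneg)
  have H0: "H \<ge> 0" unfolding H_def using hn by linarith
  have c00: "c0 \<ge> 0" unfolding c0_def by (rule pot_nonneg[OF Suc.prems(1)])
  have x0: "x \<ge> 0" unfolding x_def by (rule pot_nonneg[OF Suc.prems(1)])
  have O0: "Ou \<ge> 0" unfolding Ou_def by (rule OPT_nonneg)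
  have n0: "n \<ge> 0" unfolding n_def by simp
  have phi_eq: "phi = c0 + x" unfolding phi_def c0_def x_def pot_def by (rule sum_S_split)
  have q10: "(real u - real (Suc t)) / real u \<ge> 0" using tu by simp
  have RHS0: "0 \<le> (c0 + 2 * n * Ou) * (1 + harm (Suc t)) + ((real u - real (Suc t)) / real u) * x"
    using c00 O0 n0 x0 q10 harm_nonneg[of "Suc t"] by (intro add_nonneg_nonneg mult_nonneg_nonneg) auto
  show ?case
  proof (cases "phi = 0")
    case True
    have "Ephi S (Suc t) cs \<le> pot cs S" by (rule Ephi_le_pot[OF finS neS Suc.prems(1)])
    then show ?thesis using True RHS0 unfolding phi_def c0_def x_def Ou_def n_def u_def by simp
  next
    case False
    have phi0: "phi > 0" using False pot_nonneg[OF Suc.prems(1), of S] unfolding phi_def by simp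
    have w0: "w s \<ge> 0" for s unfolding w_def using phi0 Dmin_nonneg[OF Suc.prems(1)] by simp
    have E: "Ephi S (Suc t) cs = (\<Sum>s\<in>S. w s * F s)"
      unfolding Ephi_Suc[OF finS neS] exp_next[OF finS Suc.prems(1) False[unfolded phi_def]] w_def F_def phi_def ..
    also have "\<dots> = (\<Sum>s\<in>Xc U. w s * F s) + (\<Sum>j\<in>U. \<Sum>s\<in>Acl j. w s * F s)"
      by (simp add: sum_S_split[of _ U] sum_Xu_group[OF Suc.prems(2)])
    finally have E1: "Ephi S (Suc t) cs = (\<Sum>s\<in>Xc U. w s * F s) + (\<Sum>j\<in>U. \<Sum>s\<in>Acl j. w s * F s)" .
    define K1 where "K1 = (c0 + 2 * n * Ou) * H + ((real u - real t) / real u) * x"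
    have Fc: "F s \<le> K1" for s
    proof -
      have "F s \<le> (pot (cs@[s]) (Xc U) + 2 * n * Ou) * H + ((real u - real t) / real u) * pot (cs@[s]) (Xu U)"
        unfolding F_def H_def Ou_def n_def u_def by (rule Suc.IH) (use Suc.prems in auto)
      also have "\<dots> \<le> K1" unfolding K1_def c0_def x_def
        using pot_snoc_le[OF Suc.prems(1), of s] H0 tu n0 O0
        by (intro add_mono mult_right_mono mult_left_mono) auto
      finally show ?thesis .
    qed
    have part1: "(\<Sum>s\<in>Xc U. w s * F s) \<le> (c0 / phi) * K1"
    proof -
      have "(\<Sum>s\<in>Xc U. w s * F s) \<le> (\<Sum>s\<in>Xc U. w s * K1)"
        by (intro sum_mono mult_left_mono Fc w0)
      also have "\<dots> = (c0 / phi) * K1"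
        by (simp add: sum_distrib_right[symmetric] w_def c0_def pot_def sum_divide_distrib[symmetric])
      finally show ?thesis .
    qed
    define xj where "xj j = pot cs (Acl j)" for j
    define q2 where "q2 = (real u - 1 - real t) / (real u - 1)"
    have part2: "(\<Sum>s\<in>Acl j. w s * F s) \<le> (xj j / phi) * ((c0 + 2 * n * Ou) * H + q2 * (x - xj j))"
      if j: "j \<in> U" for j
    proof -
      define Oj where "Oj = OPT (Acl j)"
      have cardU: "card (U - {j}) = u - 1" using j Suc.prems(2) unfolding u_def by simp
      have ru: "real (card (U - {j})) = real u - 1" using cardU tu by simp
      define K2 where "K2 = (c0 + 2 * n * (Ou - Oj)) * H + q2 * (x - xj j)"
      have Fj: "F s \<le> K2 + H * pot (cs @ [s]) (Acl j)" if s: "s \<in> Acl j" for s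
      proof -
        have "F s \<le> (pot (cs@[s]) (Xc (U - {j})) + 2 * n * OPT (Xu (U - {j}))) * H
                 + ((real (card (U - {j})) - real t) / real (card (U - {j}))) * pot (cs@[s]) (Xu (U - {j}))"
          unfolding F_def H_def n_def by (rule Suc.IH) (use Suc.prems cardU tu in auto)
        also have "\<dots> = (pot (cs@[s]) (Xc U) + pot (cs@[s]) (Acl j) + 2 * n * (Ou - Oj)) * H
                 + q2 * pot (cs@[s]) (Xu U - Acl j)"
          unfolding ru q2_def Xc_remove[OF j] Xu_remove[OF j] pot_def Ou_def Oj_def OPT_def
          using sum_Xc_Acl[OF j] sum_diff_Acl[OF j] by simp
        also have "\<dots> \<le> (c0 + pot (cs@[s]) (Acl j) + 2 * n * (Ou - Oj)) * H + q2 * (x - xj j)"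
        proof -
          have a: "pot (cs@[s]) (Xc U) \<le> c0" unfolding c0_def by (rule pot_snoc_le[OF Suc.prems(1)])
          have b: "pot (cs@[s]) (Xu U - Acl j) \<le> x - xj j"
          proof -
            have "pot (cs@[s]) (Xu U - Acl j) \<le> pot cs (Xu U - Acl j)" by (rule pot_snoc_le[OF Suc.prems(1)])
            also have "\<dots> = x - xj j" unfolding x_def xj_def pot_def by (rule sum_diff_Acl[OF j])
            finally show ?thesis .
          qed
          have q20: "q2 \<ge> 0" unfolding q2_def using tu by (cases "real u - 1 = 0") (auto simp: of_nat_diff)
          have i1: "(pot (cs@[s]) (Xc U) + pot (cs@[s]) (Acl j) + 2 * n * (Ou - Oj)) * H
              \<le> (c0 + pot (cs@[s]) (Acl j) + 2 * n * (Ou - Oj)) * H" using a H0 by (intro mult_right_mono) auto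
          have i2: "q2 * pot (cs@[s]) (Xu U - Acl j) \<le> q2 * (x - xj j)" using b q20 by (intro mult_left_mono) auto
          show ?thesis using i1 i2 by linarith
        qed
        also have "\<dots> = K2 + H * pot (cs @ [s]) (Acl j)" unfolding K2_def by (simp add: algebra_simps)
        finally show ?thesis .
      qed
      have "(\<Sum>s\<in>Acl j. w s * F s) \<le> (\<Sum>s\<in>Acl j. w s * (K2 + H * pot (cs @ [s]) (Acl j)))"
        by (intro sum_mono mult_left_mono Fj w0)
      also have "\<dots> = (\<Sum>s\<in>Acl j. w s) * K2 + (H / phi) * (\<Sum>s\<in>Acl j. Dmin cs s * pot (cs @ [s]) (Acl j))"
        by (simp add: sum.distrib sum_distrib_right sum_distrib_left w_def algebra_simps)
      also have "(\<Sum>s\<in>Acl j. w s) = xj j / phi"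
        by (simp add: w_def xj_def pot_def sum_divide_distrib[symmetric])
      also have "(H / phi) * (\<Sum>s\<in>Acl j. Dmin cs s * pot (cs @ [s]) (Acl j)) \<le> (H / phi) * (2 * n * xj j * Oj)"
      proof (rule mult_left_mono)
        show "(\<Sum>s\<in>Acl j. Dmin cs s * pot (cs @ [s]) (Acl j)) \<le> 2 * n * xj j * Oj"
          unfolding n_def xj_def Oj_def OPT_Acl by (rule L32[OF fin_Acl Suc.prems(1)])
        show "0 \<le> H / phi" using H0 phi0 by simp
      qed
      also have "xj j / phi * K2 + H / phi * (2 * n * xj j * Oj) = (xj j / phi) * ((c0 + 2 * n * Ou) * H + q2 * (x - xj j))"
        unfolding K2_def by (simp add: algebra_simps)
      finally show ?thesis by simp
    qed
    have sumx: "(\<Sum>j\<in>U. xj j) = x" unfolding xj_def x_def pot_def by (rule sum_Xu_group[OF Suc.prems(2), symmetric])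
    define S2 where "S2 = (\<Sum>j\<in>U. (xj j)^2)"
    have part2s: "(\<Sum>j\<in>U. \<Sum>s\<in>Acl j. w s * F s) \<le> (1/phi) * ((c0 + 2 * n * Ou) * H * x + q2 * (x * x - S2))"
    proof -
      have "(\<Sum>j\<in>U. \<Sum>s\<in>Acl j. w s * F s) \<le> (\<Sum>j\<in>U. (xj j / phi) * ((c0 + 2 * n * Ou) * H + q2 * (x - xj j)))"
        by (intro sum_mono part2)
      also have "\<dots> = (1/phi) * ((c0 + 2 * n * Ou) * H * (\<Sum>j\<in>U. xj j) + q2 * (x * (\<Sum>j\<in>U. xj j) - S2))"
        by (simp add: S2_def sum_distrib_left sum_distrib_right sum_subtractf sum.distrib power2_eq_square algebra_simps)
      finally show ?thesis unfolding sumx .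
    qed
    have pm: "x^2 \<le> S2 * real u"
      using sum_squared_le_sum_of_squares[of xj U] unfolding sumx S2_def u_def .
    have Eb: "Ephi S (Suc t) cs \<le> (c0/phi) * ((c0 + 2 * n * Ou) * H + ((real u - real t)/real u) * x)
                + (1/phi) * ((c0 + 2 * n * Ou) * H * x + ((real u - 1 - real t)/(real u - 1)) * (x * x - S2))"
      using E1 part1 part2s unfolding K1_def q2_def by linarith
    have ineq: "Ephi S (Suc t) cs \<le> (c0 + 2 * n * Ou) * (H + 1/(real t + 1)) + ((real u - (real t + 1))/real u) * x"
      by (rule alg_final[OF phi_eq phi0 c00 x0 _ _ _ pm Eb]) (use O0 n0 tu in auto)
    have eq1: "H + 1/(real t + 1) = 1 + harm (Suc t)" unfolding H_def by (simp add: harm_Suc field_simps)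
    have eq2: "real u - (real t + 1) = real u - real (Suc t)" by simp
    have fin: "Ephi S (Suc t) cs \<le> (c0 + 2 * n * Ou) * (1 + harm (Suc t)) + ((real u - real (Suc t))/real u) * x"
      using ineq unfolding eq1 eq2 .
    then show ?thesis by (simp only: c0_def Ou_def n_def u_def x_def)
  qed
qed


lemma total:
  assumes k0: "0 < k" and gk: "\<And>s. s \<in> S \<Longrightarrow> g s < k"
  shows "measure_pmf.expectation (ext S k []) (\<lambda>l. pot l S)
     \<le> 2 * real CARD('n) * (1 + harm (k - 1)) * (\<Sum>s\<in>S. tdist s (c (g s)))"
proof -
  define n where "n = real CARD('n)"
  define K where "K = k - 1"
  have kK: "k = Suc K" using k0 by (simp add: K_def)
  define G where "G x = pot [x] (Acl (g x)) + 2 * n * (OPT S - OPT (Acl (g x)))" for x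
  have "measure_pmf.expectation (ext S k []) (\<lambda>l. pot l S) = measure_pmf.expectation (kpp_next S []) (\<lambda>x. Ephi S K [x])"
    using Ephi_Suc[OF finS neS, of K "[]"] unfolding kK by (simp add: Ephi_def)
  also have "kpp_next S [] = pmf_of_set S" by (simp add: kpp_next_def)
  also have "measure_pmf.expectation (pmf_of_set S) (\<lambda>x. Ephi S K [x]) = (\<Sum>x\<in>S. Ephi S K [x]) / real (card S)"
    by (rule integral_pmf_of_set[OF neS finS])
  finally have E: "measure_pmf.expectation (ext S k []) (\<lambda>l. pot l S) = (\<Sum>x\<in>S. Ephi S K [x]) / real (card S)" .
  have each: "Ephi S K [x] \<le> G x * (1 + harm K)" if x: "x \<in> S" for x
  proof -
    define U where "U = {..<k} - {g x}"
    have fU: "finite U" by (simp add: U_def)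
    have cU: "card U = K" using gk[OF x] by (simp add: U_def K_def)
    have gk': "\<forall>s\<in>S. g s < k" using gk by blast
    have XcU: "Xc U = Acl (g x)" using gk' by (auto simp: Xc_def Acl_def U_def)
    have XuU: "Xu U = S - Acl (g x)" using gk' by (auto simp: Xu_def Acl_def U_def)
    have OXu: "OPT (Xu U) = OPT S - OPT (Acl (g x))"
      unfolding XuU OPT_def by (rule sum_diff[OF finS]) (auto simp: Acl_def)
    have "Ephi S K [x] \<le> (pot [x] (Xc U) + 2 * n * OPT (Xu U)) * (1 + harm K)
        + ((real (card U) - real K) / real (card U)) * pot [x] (Xu U)"
      unfolding n_def by (rule AV) (use fU cU in auto)
    also have "\<dots> = G x * (1 + harm K)" unfolding G_def XcU OXu cU by simp
    finally show ?thesis .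
  qed
  have sumG: "(\<Sum>x\<in>S. G x) \<le> 2 * n * real (card S) * OPT S"
  proof -
    have grp: "(\<Sum>j\<in>{..<k}. \<Sum>x\<in>Acl j. h x) = (\<Sum>x\<in>S. h x)" for h :: "real^'n \<Rightarrow> real"
      unfolding Acl_def by (rule sum.group[OF finS]) (use gk in auto)
    have "(\<Sum>x\<in>S. G x) = (\<Sum>j\<in>{..<k}. \<Sum>x\<in>Acl j. G x)" by (rule grp[symmetric])
    also have "\<dots> \<le> (\<Sum>j\<in>{..<k}. (2 * n * OPT S) * (\<Sum>x\<in>Acl j. 1))"
    proof (rule sum_mono)
      fix j
      define Oj where "Oj = OPT (Acl j)"
      define N where "N = real (card (Acl j))"
      have "\<forall>x\<in>Acl j. G x = (\<Sum>s\<in>Acl j. tdist s x) + 2 * n * (OPT S - Oj)"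
        by (auto simp: G_def pot_single Acl_def Oj_def)
      then have "(\<Sum>x\<in>Acl j. G x) = (\<Sum>x\<in>Acl j. (\<Sum>s\<in>Acl j. tdist s x) + 2 * n * (OPT S - Oj))"
        by (intro sum.cong) auto
      also have "\<dots> = (\<Sum>x\<in>Acl j. \<Sum>s\<in>Acl j. tdist s x) + N * (2 * n * (OPT S - Oj))"
        by (simp add: sum.distrib N_def)
      also have "(\<Sum>x\<in>Acl j. \<Sum>s\<in>Acl j. tdist s x) \<le> n * N * Oj"
        unfolding n_def N_def Oj_def OPT_Acl by (rule L31[OF fin_Acl])
      also have "n * N * Oj + N * (2 * n * (OPT S - Oj)) \<le> (2 * n * OPT S) * N"
      proof -
        have "0 \<le> n * N * Oj" unfolding n_def N_def Oj_def using OPT_nonneg by simp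
        then show ?thesis by (simp add: algebra_simps)
      qed
      finally show "(\<Sum>x\<in>Acl j. G x) \<le> (2 * n * OPT S) * (\<Sum>x\<in>Acl j. 1)"
        by (simp add: N_def)
    qed
    also have "\<dots> = (2 * n * OPT S) * (\<Sum>j\<in>{..<k}. \<Sum>x\<in>Acl j. (1::real))" by (simp only: sum_distrib_left)
    also have "\<dots> = (2 * n * OPT S) * (\<Sum>x\<in>S. (1::real))" by (simp only: grp)
    also have "\<dots> = 2 * n * real (card S) * OPT S" by simp
    finally show ?thesis .
  qed
  have hK0: "(0::real) \<le> harm K" by (rule harm_nonneg)
  have hK: "(0::real) \<le> 1 + harm K" using hK0 by linarith
  have cS: "real (card S) > 0" using finS neS by (simp add: card_gt_0_iff)
  have "(\<Sum>x\<in>S. Ephi S K [x]) \<le> (\<Sum>x\<in>S. G x * (1 + harm K))" by (intro sum_mono each)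
  also have "\<dots> = (\<Sum>x\<in>S. G x) * (1 + harm K)" by (simp add: sum_distrib_right)
  also have "\<dots> \<le> (2 * n * real (card S) * OPT S) * (1 + harm K)" by (rule mult_right_mono[OF sumG hK])
  finally have sumE: "(\<Sum>x\<in>S. Ephi S K [x]) \<le> (2 * n * real (card S) * OPT S) * (1 + harm K)" .
  then have "(\<Sum>x\<in>S. Ephi S K [x]) / real (card S) \<le> (2 * n * real (card S) * OPT S) * (1 + harm K) / real (card S)"
    using cS by (intro divide_right_mono) auto
  also have "\<dots> = 2 * n * (1 + harm K) * OPT S" using cS by (simp add: field_simps)
  finally show ?thesis unfolding E n_def K_def OPT_def .
qed


end


lemma harm_bound: "0 < k \<Longrightarrow> 1 + harm (k - 1) \<le> 2 + ln (real k)"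
proof -
  assume k: "0 < k"
  have "harm (k - 1) \<le> (harm k :: real)" by (rule harm_mono) simp
  moreover have "harm k - ln (real k) \<le> harm 1 - ln (real (1::nat))"
    by (rule euler_mascheroni_sequence_decreasing) (use k in auto)
  moreover have "harm 1 = (1::real)" by (simp add: harm_def)
  ultimately show ?thesis by simp
qed

theorem mainTheorem3:
  fixes S :: "(real^'n) set" and k :: nat
    and out :: "(real^'n) list \<Rightarrow> (real^'n \<Rightarrow> nat)"
  assumes "finite S"
    and "\<forall>x\<in>S. \<forall>y\<in>S. tequiv x y \<longrightarrow> x = y"
    and "0 < k" and "k \<le> card S"
    and "\<forall>cs\<in>set_pmf (kpp_seeds S k). kmeans_output S k (\<lambda>i. cs ! i) (out cs)"
  shows "measure_pmf.expectation (kpp_seeds S k) (\<lambda>cs. kloss S k (out cs) / lstar S k)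
           \<le> 2 * real CARD('n) * (2 + ln (real k))"
proof -
  note finS = assms(1) and k0 = assms(3)
  have neS: "S \<noteq> {}" using assms(3,4) by auto
  define n where "n = real CARD('n)"
  have n1: "n \<ge> 1" unfolding n_def by simp
  define P where "P = kpp_seeds S k"
  have P_ext: "P = ext S k []" by (simp add: P_def kpp_seeds_ext)
  have finP: "finite (set_pmf P)" unfolding P_ext by (rule ext_fin[OF finS neS])
  have lenP: "length l = k" if "l \<in> set_pmf P" for l using ext_len[of l S k "[]"] that unfolding P_ext by simp
  define B where "B = 2 * n * (1 + harm (k - 1))"
  have hp: "(0::real) \<le> harm (k - 1)" by (rule harm_nonneg)
  have Bpos: "B > 0" unfolding B_def using n1 hp by (intro mult_pos_pos) auto
  have Ble: "B \<le> 2 * n * (2 + ln (real k))" unfolding B_def using harm_bound[OF k0] n1 by simp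
  define Ep where "Ep = measure_pmf.expectation P (\<lambda>l. pot l S)"
  define costc where "costc c = (\<Sum>s\<in>S. Min ((\<lambda>i. tdist s (c i)) ` {..<k}))" for c :: "nat \<Rightarrow> real^'n"
  have keybound: "Ep \<le> B * costc c" for c
  proof -
    have "\<forall>s. \<exists>i. i < k \<and> tdist s (c i) = Min ((\<lambda>i. tdist s (c i)) ` {..<k})"
    proof
      fix s
      have "Min ((\<lambda>i. tdist s (c i)) ` {..<k}) \<in> (\<lambda>i. tdist s (c i)) ` {..<k}"
        by (rule Min_in) (use k0 in auto)
      then show "\<exists>i. i < k \<and> tdist s (c i) = Min ((\<lambda>i. tdist s (c i)) ` {..<k})" by auto
    qed
    then obtain g where g: "\<And>s. g s < k" "\<And>s. tdist s (c (g s)) = Min ((\<lambda>i. tdist s (c i)) ` {..<k})"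
      by metis
    have "Ep \<le> 2 * real CARD('n) * (1 + harm (k - 1)) * (\<Sum>s\<in>S. tdist s (c (g s)))"
      unfolding Ep_def P_ext by (rule total[OF finS neS k0]) (simp add: g(1))
    then show ?thesis unfolding B_def n_def costc_def g(2) .
  qed
  define L where "L = lstar S k"
  have Lset: "L = Inf {costc c | c. True}" unfolding L_def lstar_def costc_def ..
  have ne: "{costc c | c. True} \<noteq> {}" by blast
  have cost0: "0 \<le> costc c" for c
    unfolding costc_def by (intro sum_nonneg) (subst Min_ge_iff, use k0 in \<open>auto simp: tdist_nonneg\<close>)
  have L0: "0 \<le> L" unfolding Lset by (rule cInf_greatest[OF ne]) (auto simp: cost0)
  have "Ep / B \<le> L" unfolding Lset
  proof (rule cInf_greatest[OF ne])
    fix y assume "y \<in> {costc c | c. True}"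
    then obtain c where "y = costc c" by blast
    then show "Ep / B \<le> y" using keybound[of c] Bpos by (simp add: pos_divide_le_eq mult.commute)
  qed
  then have EpL: "Ep \<le> B * L" using Bpos by (simp add: pos_divide_le_eq mult.commute)
  have kl: "kloss S k (out l) \<le> pot l S" if l: "l \<in> set_pmf P" for l
  proof -
    have "kloss S k (out l) \<le> (\<Sum>s\<in>S. Min ((\<lambda>i. tdist s (l ! i)) ` {..<k}))"
      by (rule kmeans_bound[OF finS]) (use assms(5) l in \<open>simp add: P_def\<close>)
    also have "\<dots> = pot l S" unfolding pot_def using Min_nth_Dmin[OF lenP[OF l]] by simp
    finally show ?thesis .
  qed
  show ?thesis
  proof (cases "L = 0")
    case True
    have l0: "lstar S k = 0" using True unfolding L_def .
    have "0 \<le> 2 * real CARD('n) * (2 + ln (real k))"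
      using k0 by (intro mult_nonneg_nonneg add_nonneg_nonneg) auto
    then show ?thesis unfolding P_def using l0 by simp
  next
    case False
    then have Lp: "L > 0" using L0 by simp
    have "measure_pmf.expectation P (\<lambda>cs. kloss S k (out cs) / lstar S k)
        \<le> measure_pmf.expectation P (\<lambda>cs. pot cs S / L)"
      unfolding L_def[symmetric] using kl Lp by (intro exp_mono[OF finP] divide_right_mono) auto
    also have "\<dots> = Ep / L" unfolding Ep_def by simp
    also have "\<dots> \<le> B" using EpL Lp by (simp add: pos_divide_le_eq mult.commute)
    also have "\<dots> \<le> 2 * real CARD('n) * (2 + ln (real k))" using Ble unfolding n_def .
    finally show ?thesis unfolding P_def .
  qed
qed

end
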